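(* Let $\alpha\in\mathbb R$ and $n\ge1$. There is a one-to-one correspondence between $(2n+1)$-dimensional $\alpha$-cosymplectic Lie algebras $(\mathfrak g,\eta,\omega)$ and pairs consisting of a $2n$-dimensional symplectic Lie algebra $(\mathfrak h,\Omega)$ together with a derivation $D\in\mathrm{Der}(\mathfrak h)$ such that $D+\alpha I$ is an infinitesimal symplectic transformation of $(\mathfrak h,\Omega)$. The correspondence sends $(\mathfrak g,\eta,\omega)$ to $\mathfrak h=\ker\eta$, $\Omega=\omega|_{\mathfrak h\times\mathfrak h}$, $D=\mathrm{ad}_\xi|_{\mathfrak h}$ ($\xi$ the Reeb vector), and conversely $(\mathfrak h,\Omega,D)$ to $\mathfrak g=\mathbb R\xi\oplus\mathfrak h$ with $[x,y]=[x,y]_{\mathfrak h}$, $[\xi,x]=Dx$ ($x,y\in\mathfrak h$), $\eta(\xi)=1$, $\eta|_{\mathfrak h}=0$, $\omega(\xi,\cdot)=0$, $\omega|_{\mathfrak h\times\mathfrak h}=\Omega$.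
   Context: For a Lie algebra, $d\eta(x,y)=-\eta([x,y])$ and $d\omega(x,y,z)=-\omega([x,y],z)-\omega([y,z],x)-\omega([z,x],y)$. An almost cosymplectic structure on a $(2n+1)$-dimensional Lie algebra $\mathfrak g$ is a pair $(\eta,\omega)$, $\eta\in\mathfrak g^*$, $\omega$ a $2$-form, with $\eta\wedge\omega^n\neq0$; its Reeb vector $\xi$ satisfies $\eta(\xi)=1$, $\omega(\xi,\cdot)=0$. It is $\alpha$-cosymplectic if $d\eta=0$ and $d\omega=2\alpha\,\eta\wedge\omega$. A symplectic structure on a $2n$-dimensional Lie algebra $\mathfrak h$ is a closed $2$-form $\Omega$ with $\Omega^n\neq0$. A linear map $\theta:\mathfrak h\to\mathfrak h$ is an infinitesimal symplectic transformation if $\theta^T\circ\Omega+\Omega\circ\theta=0$, equivalently if $(x,y)\mapsto\Omega(\theta x,y)$ is symmetric. *)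

theory Defs
  imports "HOL-Analysis.Analysis" "HOL-Combinatorics.Permutations"
begin

text \<open>Values of B outside V are irrelevant.\<close>

definition linear_on :: "'a::real_vector set \<Rightarrow> ('a \<Rightarrow> 'b::real_vector) \<Rightarrow> bool" where
  "linear_on V f \<longleftrightarrow> (\<forall>x\<in>V. \<forall>y\<in>V. \<forall>c::real.
      f (x + y) = f x + f y \<and> f (c *\<^sub>R x) = c *\<^sub>R f x)"

definition bilinear_on :: "'a::real_vector set \<Rightarrow> ('a \<Rightarrow> 'a \<Rightarrow> 'b::real_vector) \<Rightarrow> bool" where
  "bilinear_on V B \<longleftrightarrow> (\<forall>x\<in>V. linear_on V (B x)) \<and> (\<forall>y\<in>V. linear_on V (\<lambda>x. B x y))"

definition lie_algebra :: "'a::real_vector set \<Rightarrow> ('a \<Rightarrow> 'a \<Rightarrow> 'a) \<Rightarrow> bool" where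
  "lie_algebra V B \<longleftrightarrow> subspace V \<and> (\<forall>x\<in>V. \<forall>y\<in>V. B x y \<in> V) \<and> bilinear_on V B
     \<and> (\<forall>x\<in>V. B x x = 0)
     \<and> (\<forall>x\<in>V. \<forall>y\<in>V. \<forall>z\<in>V. B x (B y z) + B y (B z x) + B z (B x y) = 0)"

definition two_form :: "'a::real_vector set \<Rightarrow> ('a \<Rightarrow> 'a \<Rightarrow> real) \<Rightarrow> bool" where
  "two_form V \<omega> \<longleftrightarrow> bilinear_on V \<omega> \<and> (\<forall>x\<in>V. \<omega> x x = 0)"

definition d1 :: "('a \<Rightarrow> 'a \<Rightarrow> 'a) \<Rightarrow> ('a \<Rightarrow> real) \<Rightarrow> 'a \<Rightarrow> 'a \<Rightarrow> real" where
  "d1 B \<eta> x y = - \<eta> (B x y)"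

definition d2 :: "('a \<Rightarrow> 'a \<Rightarrow> 'a) \<Rightarrow> ('a \<Rightarrow> 'a \<Rightarrow> real) \<Rightarrow> 'a \<Rightarrow> 'a \<Rightarrow> 'a \<Rightarrow> real" where
  "d2 B \<omega> x y z = - \<omega> (B x y) z - \<omega> (B y z) x - \<omega> (B z x) y"

text \<open>Wedge products (convention (a wedge b) = (p+q)!/(p!q!) Alt(a tensor b)).\<close>

definition wedge12 :: "('a \<Rightarrow> real) \<Rightarrow> ('a \<Rightarrow> 'a \<Rightarrow> real) \<Rightarrow> 'a \<Rightarrow> 'a \<Rightarrow> 'a \<Rightarrow> real" where
  "wedge12 \<eta> \<omega> x y z = \<eta> x * \<omega> y z + \<eta> y * \<omega> z x + \<eta> z * \<omega> x y"

definition omega_pow :: "('a \<Rightarrow> 'a \<Rightarrow> real) \<Rightarrow> nat \<Rightarrow> (nat \<Rightarrow> 'a) \<Rightarrow> real" where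
  "omega_pow \<omega> n v = (1 / 2 ^ n) *
     (\<Sum>\<sigma> | \<sigma> permutes {..<2*n}. of_int (sign \<sigma>) *
        (\<Prod>i<n. \<omega> (v (\<sigma> (2*i))) (v (\<sigma> (2*i+1)))))"

definition eta_omega_pow :: "('a \<Rightarrow> real) \<Rightarrow> ('a \<Rightarrow> 'a \<Rightarrow> real) \<Rightarrow> nat \<Rightarrow> (nat \<Rightarrow> 'a) \<Rightarrow> real" where
  "eta_omega_pow \<eta> \<omega> n v = (1 / 2 ^ n) *
     (\<Sum>\<sigma> | \<sigma> permutes {..<2*n+1}. of_int (sign \<sigma>) * \<eta> (v (\<sigma> 0)) *
        (\<Prod>i<n. \<omega> (v (\<sigma> (2*i+1))) (v (\<sigma> (2*i+2)))))"

definition nonzero_on :: "'a set \<Rightarrow> nat \<Rightarrow> ((nat \<Rightarrow> 'a) \<Rightarrow> real) \<Rightarrow> bool" where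
  "nonzero_on V k F \<longleftrightarrow> (\<exists>v. (\<forall>i<k. v i \<in> V) \<and> F v \<noteq> 0)"

definition almost_cosymplectic ::
  "'a::real_vector set \<Rightarrow> ('a \<Rightarrow> real) \<Rightarrow> ('a \<Rightarrow> 'a \<Rightarrow> real) \<Rightarrow> nat \<Rightarrow> bool" where
  "almost_cosymplectic V \<eta> \<omega> n \<longleftrightarrow> linear_on V \<eta> \<and> two_form V \<omega>
     \<and> nonzero_on V (2*n+1) (eta_omega_pow \<eta> \<omega> n)"

definition alpha_cosymplectic ::
  "'a::real_vector set \<Rightarrow> ('a \<Rightarrow> 'a \<Rightarrow> 'a) \<Rightarrow> ('a \<Rightarrow> real) \<Rightarrow> ('a \<Rightarrow> 'a \<Rightarrow> real) \<Rightarrow> real \<Rightarrow> nat \<Rightarrow> bool" where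
  "alpha_cosymplectic V B \<eta> \<omega> \<alpha> n \<longleftrightarrow> almost_cosymplectic V \<eta> \<omega> n
     \<and> (\<forall>x\<in>V. \<forall>y\<in>V. d1 B \<eta> x y = 0)
     \<and> (\<forall>x\<in>V. \<forall>y\<in>V. \<forall>z\<in>V. d2 B \<omega> x y z = 2 * \<alpha> * wedge12 \<eta> \<omega> x y z)"

definition reeb :: "'a::real_vector set \<Rightarrow> ('a \<Rightarrow> real) \<Rightarrow> ('a \<Rightarrow> 'a \<Rightarrow> real) \<Rightarrow> 'a \<Rightarrow> bool" where
  "reeb V \<eta> \<omega> \<xi> \<longleftrightarrow> \<xi> \<in> V \<and> \<eta> \<xi> = 1 \<and> (\<forall>y\<in>V. \<omega> \<xi> y = 0)"

definition symplectic ::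
  "'a::real_vector set \<Rightarrow> ('a \<Rightarrow> 'a \<Rightarrow> 'a) \<Rightarrow> ('a \<Rightarrow> 'a \<Rightarrow> real) \<Rightarrow> nat \<Rightarrow> bool" where
  "symplectic H B \<Omega> n \<longleftrightarrow> two_form H \<Omega>
     \<and> (\<forall>x\<in>H. \<forall>y\<in>H. \<forall>z\<in>H. d2 B \<Omega> x y z = 0)
     \<and> nonzero_on H (2*n) (omega_pow \<Omega> n)"

definition derivation :: "'a::real_vector set \<Rightarrow> ('a \<Rightarrow> 'a \<Rightarrow> 'a) \<Rightarrow> ('a \<Rightarrow> 'a) \<Rightarrow> bool" where
  "derivation H B D \<longleftrightarrow> (\<forall>x\<in>H. D x \<in> H) \<and> linear_on H D
     \<and> (\<forall>x\<in>H. \<forall>y\<in>H. D (B x y) = B (D x) y + B x (D y))"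

definition inf_symplectic :: "'a::real_vector set \<Rightarrow> ('a \<Rightarrow> 'a \<Rightarrow> real) \<Rightarrow> ('a \<Rightarrow> 'a) \<Rightarrow> bool" where
  "inf_symplectic H \<Omega> \<theta> \<longleftrightarrow> (\<forall>x\<in>H. \<theta> x \<in> H) \<and> linear_on H \<theta>
     \<and> (\<forall>x\<in>H. \<forall>y\<in>H. \<Omega> (\<theta> x) y = \<Omega> (\<theta> y) x)"

text \<open>The extension g = R xi (+) h built from (h, Omega, D); xi = (1,0).\<close>

definition ext_carrier :: "'b::real_vector set \<Rightarrow> (real \<times> 'b) set" where
  "ext_carrier H = {p. snd p \<in> H}"

definition ext_br :: "('b::real_vector \<Rightarrow> 'b \<Rightarrow> 'b) \<Rightarrow> ('b \<Rightarrow> 'b) \<Rightarrow> real \<times> 'b \<Rightarrow> real \<times> 'b \<Rightarrow> real \<times> 'b" where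
  "ext_br B D p q = (0, B (snd p) (snd q) + fst p *\<^sub>R D (snd q) - fst q *\<^sub>R D (snd p))"

definition ext_eta :: "real \<times> 'b \<Rightarrow> real" where
  "ext_eta p = fst p"

definition ext_omega :: "('b \<Rightarrow> 'b \<Rightarrow> real) \<Rightarrow> real \<times> 'b \<Rightarrow> real \<times> 'b \<Rightarrow> real" where
  "ext_omega \<Omega> p q = \<Omega> (snd p) (snd q)"

end

theory Submission
  imports Defs "Jordan_Normal_Form.Determinant"
begin


lemma linear_on_subset: "linear_on V f \<Longrightarrow> H \<subseteq> V \<Longrightarrow> linear_on H f"
  unfolding linear_on_def by blast

lemma linear_on_add: "linear_on V f \<Longrightarrow> x \<in> V \<Longrightarrow> y \<in> V \<Longrightarrow> f (x + y) = f x + f y"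
  unfolding linear_on_def by blast

lemma linear_on_scale: "linear_on V f \<Longrightarrow> x \<in> V \<Longrightarrow> f (c *\<^sub>R x) = c *\<^sub>R f x"
  unfolding linear_on_def by blast

lemma linear_on_0: "linear_on V f \<Longrightarrow> subspace V \<Longrightarrow> f 0 = 0"
proof -
  assume l: "linear_on V f" and s: "subspace V"
  have "0 \<in> V" using s by (rule subspace_0)
  hence "f (0 + 0) = f 0 + f 0" using l unfolding linear_on_def by blast
  thus ?thesis by simp
qed

lemma linear_on_neg: "linear_on V f \<Longrightarrow> x \<in> V \<Longrightarrow> f (- x) = - f x"
  using linear_on_scale[of V f x "-1"] by simp

lemma linear_on_diff: "linear_on V f \<Longrightarrow> subspace V \<Longrightarrow> x \<in> V \<Longrightarrow> y \<in> V \<Longrightarrow> f (x - y) = f x - f y"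
  using linear_on_add[of V f x "- y"] linear_on_neg[of V f y] subspace_neg[of V y]
  by simp

lemma linear_on_sum:
  assumes l: "linear_on V f" and s: "subspace V" and fin: "finite S" and u: "\<forall>i\<in>S. u i \<in> V"
  shows "f (\<Sum>i\<in>S. c i *\<^sub>R u i) = (\<Sum>i\<in>S. c i *\<^sub>R f (u i))"
  using fin u
proof (induction S rule: finite_induct)
  case empty
  then show ?case using linear_on_0[OF l s] by simp
next
  case (insert a S)
  have r: "(\<Sum>i\<in>S. c i *\<^sub>R u i) \<in> V"
    using insert by (intro subspace_sum[OF s] subspace_scale[OF s]) auto
  have a: "c a *\<^sub>R u a \<in> V" using insert by (intro subspace_scale[OF s]) auto
  have "f (\<Sum>i\<in>insert a S. c i *\<^sub>R u i) = f (c a *\<^sub>R u a + (\<Sum>i\<in>S. c i *\<^sub>R u i))"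
    using insert by simp
  also have "\<dots> = c a *\<^sub>R f (u a) + f (\<Sum>i\<in>S. c i *\<^sub>R u i)"
    using linear_on_add[OF l a r] linear_on_scale[OF l, of "u a" "c a"] insert by simp
  also have "\<dots> = (\<Sum>i\<in>insert a S. c i *\<^sub>R f (u i))" using insert by simp
  finally show ?case .
qed

lemma two_form_antisym:
  assumes w: "two_form V \<omega>" and s: "subspace V" and x: "x \<in> V" and y: "y \<in> V"
  shows "\<omega> x y = - \<omega> y x"
proof -
  have xy: "x + y \<in> V" using s x y by (rule subspace_add)
  have l1: "linear_on V (\<lambda>a. \<omega> a (x + y))" using w xy unfolding two_form_def bilinear_on_def by blast
  have l2: "linear_on V (\<omega> x)" "linear_on V (\<omega> y)" using w x y unfolding two_form_def bilinear_on_def by blast+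
  have "0 = \<omega> (x + y) (x + y)" using w xy unfolding two_form_def by simp
  also have "\<dots> = \<omega> x (x + y) + \<omega> y (x + y)" using linear_on_add[OF l1 x y] by simp
  also have "\<dots> = \<omega> x y + \<omega> y x" using linear_on_add[OF l2(1) x y] linear_on_add[OF l2(2) x y] w x y
    unfolding two_form_def by simp
  finally show ?thesis by simp
qed

lemma lie_antisym:
  assumes L: "lie_algebra V B" and x: "x \<in> V" and y: "y \<in> V"
  shows "B x y = - B y x"
proof -
  have s: "subspace V" using L unfolding lie_algebra_def by blast
  have xy: "x + y \<in> V" using s x y by (rule subspace_add)
  have bl: "bilinear_on V B" using L unfolding lie_algebra_def by blast
  have l1: "linear_on V (\<lambda>a. B a (x + y))" using bl xy unfolding bilinear_on_def by blast
  have l2: "linear_on V (B x)" "linear_on V (B y)" using bl x y unfolding bilinear_on_def by blast+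
  have al: "\<forall>z\<in>V. B z z = 0" using L unfolding lie_algebra_def by blast
  have "0 = B (x + y) (x + y)" using al xy by simp
  also have "\<dots> = B x (x + y) + B y (x + y)" using linear_on_add[OF l1 x y] by simp
  also have "\<dots> = B x y + B y x" using linear_on_add[OF l2(1) x y] linear_on_add[OF l2(2) x y] al x y
    by simp
  finally show ?thesis by (simp add: eq_neg_iff_add_eq_0)
qed

section \<open>Alternating multilinear forms\<close>

definition multilin :: "'a::real_vector set \<Rightarrow> nat \<Rightarrow> ((nat \<Rightarrow> 'a) \<Rightarrow> real) \<Rightarrow> bool" where
  "multilin V m G \<longleftrightarrow> (\<forall>w s x y c. (\<forall>l<m. w l \<in> V) \<longrightarrow> s < m \<longrightarrow> x \<in> V \<longrightarrow> y \<in> V \<longrightarrow>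
     G (w(s := x + y)) = G (w(s := x)) + G (w(s := y)) \<and> G (w(s := c *\<^sub>R x)) = c * G (w(s := x)))"

definition alternating :: "nat \<Rightarrow> ((nat \<Rightarrow> 'a) \<Rightarrow> real) \<Rightarrow> bool" where
  "alternating m G \<longleftrightarrow> (\<forall>v i j. i < m \<longrightarrow> j < m \<longrightarrow> i \<noteq> j \<longrightarrow> v i = v j \<longrightarrow> G v = 0)"

definition alt :: "nat \<Rightarrow> ((nat \<Rightarrow> 'a) \<Rightarrow> real) \<Rightarrow> (nat \<Rightarrow> 'a) \<Rightarrow> real" where
  "alt m F v = (\<Sum>\<sigma> | \<sigma> permutes {..<m}. of_int (sign \<sigma>) * F (v \<circ> \<sigma>))"

lemma permutation_lessThan: "p permutes {..<(m::nat)} \<Longrightarrow> permutation p"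
  unfolding permutation_permutes by (intro exI[of _ "{..<m}"]) simp

lemma sign_compose_permutes:
  "p permutes {..<(m::nat)} \<Longrightarrow> q permutes {..<m} \<Longrightarrow> sign (p \<circ> q) = sign p * sign q"
  by (rule sign_compose; rule permutation_lessThan; assumption)

lemma alt_perm:
  assumes t: "\<tau> permutes {..<m}"
  shows "alt m F (v \<circ> \<tau>) = of_int (sign \<tau>) * alt m F v"
proof -
  have "alt m F (v \<circ> \<tau>) = (\<Sum>\<sigma> | \<sigma> permutes {..<m}. of_int (sign \<sigma>) * F (v \<circ> \<tau> \<circ> \<sigma>))"
    by (simp add: alt_def)
  also have "\<dots> = (\<Sum>\<sigma> | \<sigma> permutes {..<m}. of_int (sign (Hilbert_Choice.inv \<tau> \<circ> \<sigma>)) * F (v \<circ> \<tau> \<circ> (Hilbert_Choice.inv \<tau> \<circ> \<sigma>)))"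
    by (rule setum_permutations_compose_left[OF permutes_inv[OF t]])
  also have "\<dots> = (\<Sum>\<sigma> | \<sigma> permutes {..<m}. of_int (sign \<tau>) * (of_int (sign \<sigma>) * F (v \<circ> \<sigma>)))"
  proof (rule sum.cong[OF refl])
    fix \<sigma> assume "\<sigma> \<in> {\<sigma>. \<sigma> permutes {..<m}}"
    then have s: "\<sigma> permutes {..<m}" by simp
    have "v \<circ> \<tau> \<circ> (Hilbert_Choice.inv \<tau> \<circ> \<sigma>) = v \<circ> (\<tau> \<circ> Hilbert_Choice.inv \<tau>) \<circ> \<sigma>" by (simp add: o_assoc)
    also have "\<dots> = v \<circ> \<sigma>" using permutes_inv_o(1)[OF t] by simp
    finally have e: "v \<circ> \<tau> \<circ> (Hilbert_Choice.inv \<tau> \<circ> \<sigma>) = v \<circ> \<sigma>" .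
    have "sign (Hilbert_Choice.inv \<tau> \<circ> \<sigma>) = sign (Hilbert_Choice.inv \<tau>) * sign \<sigma>"
      using sign_compose_permutes[OF permutes_inv[OF t] s] .
    also have "sign (Hilbert_Choice.inv \<tau>) = sign \<tau>"
      by (rule sign_inverse[OF permutation_lessThan[OF t]])
    finally have s2: "sign (Hilbert_Choice.inv \<tau> \<circ> \<sigma>) = sign \<tau> * sign \<sigma>" .
    show "of_int (sign (Hilbert_Choice.inv \<tau> \<circ> \<sigma>)) * F (v \<circ> \<tau> \<circ> (Hilbert_Choice.inv \<tau> \<circ> \<sigma>)) =
        of_int (sign \<tau>) * (of_int (sign \<sigma>) * F (v \<circ> \<sigma>))" by (simp only: e s2 of_int_mult mult.assoc)
  qed
  also have "\<dots> = of_int (sign \<tau>) * alt m F v" by (simp add: alt_def sum_distrib_left)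
  finally show ?thesis .
qed

lemma alt_alternating: "alternating m (alt m F)"
  unfolding alternating_def
proof (intro allI impI)
  fix v :: "nat \<Rightarrow> 'a" and i j
  assume ij: "i < m" "j < m" "i \<noteq> j" and e: "v i = v j"
  let ?t = "Transposition.transpose i j"
  have t: "?t permutes {..<m}" using ij by (intro permutes_swap_id) auto
  have "v \<circ> ?t = v" using e by (auto simp: fun_eq_iff Transposition.transpose_def)
  hence "alt m F v = of_int (sign ?t) * alt m F v" using alt_perm[OF t, of F v] by simp
  also have "\<dots> = - alt m F v" using ij by (simp add: sign_swap_id)
  finally show "alt m F v = 0" by simp
qed

lemma upd_comp_perm:
  assumes s: "\<sigma> permutes S"
  shows "(v(j := z)) \<circ> \<sigma> = (v \<circ> \<sigma>)(Hilbert_Choice.inv \<sigma> j := z)"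
proof
  fix k
  show "((v(j := z)) \<circ> \<sigma>) k = ((v \<circ> \<sigma>)(Hilbert_Choice.inv \<sigma> j := z)) k"
  proof (cases "\<sigma> k = j")
    case True
    then have "Hilbert_Choice.inv \<sigma> j = k" using permutes_inv_eq[OF s] by blast
    then show ?thesis using True by simp
  next
    case False
    then have "Hilbert_Choice.inv \<sigma> j \<noteq> k" using permutes_inv_eq[OF s] by blast
    then show ?thesis using False by simp
  qed
qed

lemma alt_multilin:
  assumes M: "multilin V m F"
  shows "multilin V m (alt m F)"
  unfolding multilin_def
proof (intro allI impI)
  fix w :: "nat \<Rightarrow> 'a" and s x y and c :: real
  assume w: "\<forall>l<m. w l \<in> V" and sm: "s < m" and x: "x \<in> V" and y: "y \<in> V"
  have ws: "\<And>\<sigma>. \<sigma> permutes {..<m} \<Longrightarrow> (\<forall>l<m. (w \<circ> \<sigma>) l \<in> V)"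
    using w by (metis comp_apply lessThan_iff permutes_in_image)
  have iss: "\<And>\<sigma>. \<sigma> permutes {..<m} \<Longrightarrow> Hilbert_Choice.inv \<sigma> s < m"
    using sm by (metis lessThan_iff permutes_in_image permutes_inv)
  have "alt m F (w(s := x + y)) = (\<Sum>\<sigma> | \<sigma> permutes {..<m}.
      of_int (sign \<sigma>) * F ((w \<circ> \<sigma>)(Hilbert_Choice.inv \<sigma> s := x)) + of_int (sign \<sigma>) * F ((w \<circ> \<sigma>)(Hilbert_Choice.inv \<sigma> s := y)))"
    unfolding alt_def
  proof (rule sum.cong[OF refl])
    fix \<sigma> assume "\<sigma> \<in> {\<sigma>. \<sigma> permutes {..<m}}"
    hence p: "\<sigma> permutes {..<m}" by simp
    show "of_int (sign \<sigma>) * F (w(s := x + y) \<circ> \<sigma>) =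
      of_int (sign \<sigma>) * F ((w \<circ> \<sigma>)(Hilbert_Choice.inv \<sigma> s := x)) + of_int (sign \<sigma>) * F ((w \<circ> \<sigma>)(Hilbert_Choice.inv \<sigma> s := y))"
      using M ws[OF p] iss[OF p] x y unfolding upd_comp_perm[OF p] multilin_def
      by (simp add: distrib_left)
  qed
  also have "\<dots> = alt m F (w(s := x)) + alt m F (w(s := y))"
    unfolding alt_def sum.distrib by (intro arg_cong2[where f="(+)"] sum.cong) (auto simp: upd_comp_perm)
  finally have 1: "alt m F (w(s := x + y)) = alt m F (w(s := x)) + alt m F (w(s := y))" .
  have "alt m F (w(s := c *\<^sub>R x)) = (\<Sum>\<sigma> | \<sigma> permutes {..<m}.
      c * (of_int (sign \<sigma>) * F ((w \<circ> \<sigma>)(Hilbert_Choice.inv \<sigma> s := x))))"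
    unfolding alt_def
  proof (rule sum.cong[OF refl])
    fix \<sigma> assume "\<sigma> \<in> {\<sigma>. \<sigma> permutes {..<m}}"
    hence p: "\<sigma> permutes {..<m}" by simp
    show "of_int (sign \<sigma>) * F (w(s := c *\<^sub>R x) \<circ> \<sigma>) =
      c * (of_int (sign \<sigma>) * F ((w \<circ> \<sigma>)(Hilbert_Choice.inv \<sigma> s := x)))"
      using M ws[OF p] iss[OF p] x y unfolding upd_comp_perm[OF p] multilin_def
      by simp
  qed
  also have "\<dots> = c * alt m F (w(s := x))"
    unfolding alt_def sum_distrib_left by (intro sum.cong) (auto simp: upd_comp_perm)
  finally show "alt m F (w(s := x + y)) = alt m F (w(s := x)) + alt m F (w(s := y)) \<and>
       alt m F (w(s := c *\<^sub>R x)) = c * alt m F (w(s := x))" using 1 by (rule conjI[rotated])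
qed

lemma multilin_const: "multilin V m G \<Longrightarrow> multilin V m (\<lambda>v. a * G v)"
  unfolding multilin_def by (metis distrib_left mult.left_commute)

lemma alternating_const: "alternating m G \<Longrightarrow> alternating m (\<lambda>v. a * G v)"
  unfolding alternating_def by simp


section \<open>Coordinates with respect to a nonvanishing alternating form\<close>

lemma G_upd:
  assumes M: "multilin V m G" and v: "\<forall>l<m. v l \<in> V" and j: "j < m" and x: "x \<in> V" and y: "y \<in> V"
  shows "G (v(j := x + y)) = G (v(j := x)) + G (v(j := y))" "G (v(j := c *\<^sub>R x)) = c * G (v(j := x))"
  using M v j x y unfolding multilin_def by blast+

lemma G_sum:
  assumes M: "multilin V m G" and s: "subspace V" and v: "\<forall>l<m. v l \<in> V" and j: "j < m"
    and fin: "finite S" and u: "\<forall>i\<in>S. u i \<in> V"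
  shows "G (v(j := \<Sum>i\<in>S. c i *\<^sub>R u i)) = (\<Sum>i\<in>S. c i * G (v(j := u i)))"
  using fin u
proof (induction S rule: finite_induct)
  case empty
  have "v j \<in> V" using v j by blast
  hence "G (v(j := 0 *\<^sub>R v j)) = 0 * G (v(j := v j))" using G_upd(2)[OF M v j] by blast
  then show ?case by (simp only: sum.empty scale_zero_left mult_zero_left)
next
  case (insert a S)
  have r: "(\<Sum>i\<in>S. c i *\<^sub>R u i) \<in> V"
    using insert by (intro subspace_sum[OF s] subspace_scale[OF s]) auto
  have ua: "u a \<in> V" using insert by auto
  have a: "c a *\<^sub>R u a \<in> V" using ua by (intro subspace_scale[OF s])
  have "G (v(j := \<Sum>i\<in>insert a S. c i *\<^sub>R u i)) = G (v(j := c a *\<^sub>R u a + (\<Sum>i\<in>S. c i *\<^sub>R u i)))"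
    using insert by simp
  also have "\<dots> = c a * G (v(j := u a)) + G (v(j := \<Sum>i\<in>S. c i *\<^sub>R u i))"
    using G_upd[OF M v j a r] G_upd(2)[OF M v j ua ua, of "c a"] by simp
  also have "G (v(j := \<Sum>i\<in>S. c i *\<^sub>R u i)) = (\<Sum>i\<in>S. c i * G (v(j := u i)))"
    using insert.IH insert.prems by blast
  also have "c a * G (v(j := u a)) + (\<Sum>i\<in>S. c i * G (v(j := u i))) = (\<Sum>i\<in>insert a S. c i * G (v(j := u i)))"
    by (simp only: sum.insert[OF insert.hyps])
  finally show ?case .
qed

lemma alternating_upd:
  assumes A: "alternating m G" and i: "i < m" and j: "j < m" and ij: "i \<noteq> j"
  shows "G (v(j := v i)) = 0"
proof -
  have "(v(j := v i)) i = (v(j := v i)) j" using ij by simp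
  thus ?thesis using A i j ij unfolding alternating_def by blast
qed

lemma G_rep:
  assumes M: "multilin V m G" and A: "alternating m G" and s: "subspace V" and v: "\<forall>l<m. v l \<in> V"
    and j: "j < m"
  shows "G (v(j := \<Sum>i<m. c i *\<^sub>R v i)) = c j * G v"
proof -
  have "G (v(j := \<Sum>i<m. c i *\<^sub>R v i)) = (\<Sum>i<m. c i * G (v(j := v i)))"
    using G_sum[OF M s v j, of "{..<m}" v c] v by auto
  also have "\<dots> = c j * G (v(j := v j)) + (\<Sum>i\<in>{..<m} - {j}. c i * G (v(j := v i)))"
    by (rule sum.remove) (use j in auto)
  also have "(\<Sum>i\<in>{..<m} - {j}. c i * G (v(j := v i))) = 0"
  proof (rule sum.neutral, rule ballI)
    fix i assume i: "i \<in> {..<m} - {j}"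
    have "G (v(j := v i)) = 0"
      using alternating_upd[OF A, of i j v] i j by simp
    thus "c i * G (v(j := v i)) = 0" by simp
  qed
  finally show ?thesis by (simp only: fun_upd_triv add_0_right)
qed

lemma G_basis:
  assumes M: "multilin V m G" and A: "alternating m G" and s: "subspace V" and v: "\<forall>l<m. v l \<in> V"
    and nz: "G v \<noteq> 0" and d: "dim V = m" and m0: "0 < m" and x: "x \<in> V"
  shows "\<exists>c. x = (\<Sum>i<m. c i *\<^sub>R v i)"
proof -
  let ?S = "v ` {..<m}"
  have inj: "inj_on v {..<m}"
  proof (rule inj_onI, rule ccontr)
    fix a b assume "a \<in> {..<m}" "b \<in> {..<m}" "v a = v b" "a \<noteq> b"
    then have "G v = 0" using A unfolding alternating_def by (meson lessThan_iff)
    with nz show False by simp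
  qed
  have SV: "?S \<subseteq> V" using v by auto
  have ind: "independent ?S"
  proof
    assume "dependent ?S"
    then obtain a where a: "a \<in> ?S" "a \<in> span (?S - {a})" unfolding dependent_def by blast
    then obtain j where j: "j < m" "a = v j" by auto
    have e: "?S - {a} = v ` ({..<m} - {j})" using j inj_on_image_set_diff[OF inj, of "{..<m}" "{j}"] by auto
    have "a \<in> range (\<lambda>u. \<Sum>y\<in>v ` ({..<m} - {j}). u y *\<^sub>R y)"
      using a(2) unfolding e span_finite[OF finite_imageI[OF finite_Diff[OF finite_lessThan]]] .
    then obtain u where u: "a = (\<Sum>y\<in>v ` ({..<m} - {j}). u y *\<^sub>R y)" by blast
    have inj2: "inj_on v ({..<m} - {j})" using inj by (rule inj_on_subset) auto
    have u2: "v j = (\<Sum>i\<in>{..<m} - {j}. u (v i) *\<^sub>R v i)"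
      using u j sum.reindex[OF inj2, of "\<lambda>y. u y *\<^sub>R y"] by simp
    have "G v = G (v(j := v j))" by simp
    also have "\<dots> = (\<Sum>i\<in>{..<m} - {j}. u (v i) * G (v(j := v i)))"
      by (subst u2, rule G_sum[OF M s v j(1)]) (use v in auto)
    also have "\<dots> = 0"
    proof (rule sum.neutral, rule ballI)
      fix i assume i: "i \<in> {..<m} - {j}"
      have "G (v(j := v i)) = 0"
        using alternating_upd[OF A, of i j v] i j by simp
      thus "u (v i) * G (v(j := v i)) = 0" by simp
    qed
    finally show False using nz by simp
  qed
  have cardS: "card ?S = m" using card_image[OF inj] by simp
  obtain B where B: "B \<subseteq> V" "independent B" "V \<subseteq> span B" "card B = dim V" by (rule basis_exists)
  have finB: "finite B" using B(4) d m0 by (intro card_ge_0_finite) simp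
  have xs: "x \<in> span ?S"
  proof (rule ccontr)
    assume nx: "x \<notin> span ?S"
    have i2: "independent (insert x ?S)" using independent_insertI[OF nx ind] .
    have "insert x ?S \<subseteq> V" using SV x by (rule insert_subsetI[rotated])
    hence sub: "insert x ?S \<subseteq> span B" using B(3) by (rule order_trans)
    have "card (insert x ?S) \<le> card B" using independent_span_bound[OF finB i2 sub] by (rule conjunct2)
    hence le: "card (insert x ?S) \<le> m" using B(4) d by simp
    have "x \<notin> ?S"
    proof
      assume "x \<in> ?S"
      hence "x \<in> span ?S" by (rule span_base)
      with nx show False by (rule notE)
    qed
    hence "card (insert x ?S) = Suc m" using cardS by (simp add: card_insert_disjoint)
    with le show False by simp
  qed
  then obtain u where u: "x = (\<Sum>y\<in>?S. u y *\<^sub>R y)"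
    unfolding span_finite[OF finite_imageI[OF finite_lessThan]] by blast
  have "x = (\<Sum>i<m. u (v i) *\<^sub>R v i)" using u sum.reindex[OF inj, of "\<lambda>y. u y *\<^sub>R y"] by simp
  thus ?thesis by (rule exI[of _ "\<lambda>i. u (v i)"])
qed

lemma G_zero_vec:
  assumes M: "multilin V m G" and A: "alternating m G" and s: "subspace V" and v: "\<forall>l<m. v l \<in> V"
    and nz: "G v \<noteq> 0" and d: "dim V = m" and m0: "0 < m" and x: "x \<in> V"
    and z: "\<forall>j<m. G (v(j := x)) = 0"
  shows "x = 0"
proof -
  obtain c where c: "x = (\<Sum>i<m. c i *\<^sub>R v i)" using G_basis[OF M A s v nz d m0 x] by blast
  have "\<forall>j<m. c j = 0"
  proof (intro allI impI)
    fix j assume j: "j < m"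
    have "c j * G v = 0" using G_rep[OF M A s v j, of c] z j c by simp
    thus "c j = 0" using nz by simp
  qed
  thus ?thesis using c by simp
qed




definition FE :: "('a \<Rightarrow> real) \<Rightarrow> ('a \<Rightarrow> 'a \<Rightarrow> real) \<Rightarrow> nat \<Rightarrow> (nat \<Rightarrow> 'a) \<Rightarrow> real" where
  "FE \<eta> \<omega> n w = \<eta> (w 0) * (\<Prod>i<n. \<omega> (w (2*i+1)) (w (2*i+2)))"

definition FO :: "('a \<Rightarrow> 'a \<Rightarrow> real) \<Rightarrow> nat \<Rightarrow> (nat \<Rightarrow> 'a) \<Rightarrow> real" where
  "FO \<omega> n w = (\<Prod>i<n. \<omega> (w (2*i)) (w (2*i+1)))"

lemma eta_omega_pow_alt: "eta_omega_pow \<eta> \<omega> n v = (1/2^n) * alt (2*n+1) (FE \<eta> \<omega> n) v"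
  unfolding eta_omega_pow_def alt_def FE_def by (simp add: mult.assoc)

lemma omega_pow_alt: "omega_pow \<omega> n v = (1/2^n) * alt (2*n) (FO \<omega> n) v"
  unfolding omega_pow_def alt_def FO_def by simp

lemma prod_slot:
  assumes i0: "i0 < (n::nat)"
    and other: "\<And>i. i < n \<Longrightarrow> i \<noteq> i0 \<Longrightarrow> f i (w(s := z)) = f i w"
  shows "(\<Prod>i<n. f i (w(s := z))) = f i0 (w(s := z)) * (\<Prod>i\<in>{..<n}-{i0}. f i w)"
proof -
  have "(\<Prod>i<n. f i (w(s := z))) = f i0 (w(s := z)) * (\<Prod>i\<in>{..<n}-{i0}. f i (w(s := z)))"
    by (rule prod.remove) (use i0 in auto)
  also have "(\<Prod>i\<in>{..<n}-{i0}. f i (w(s := z))) = (\<Prod>i\<in>{..<n}-{i0}. f i w)"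
    by (rule prod.cong[OF refl]) (use other in auto)
  finally show ?thesis .
qed

lemma slot_lin_from:
  assumes g: "linear_on V g" and H: "\<And>z. H (w(s := z)) = K * g z" and x: "x \<in> V" and y: "y \<in> V"
  shows "H (w(s := x + y)) = H (w(s := x)) + H (w(s := y)) \<and> H (w(s := c *\<^sub>R x)) = c * H (w(s := x))"
  using linear_on_add[OF g x y] linear_on_scale[OF g x, of c] unfolding H
  by (simp add: distrib_left)

lemma multilin_from:
  assumes "\<And>w s. (\<forall>l<m. w l \<in> V) \<Longrightarrow> s < m \<Longrightarrow> \<exists>K g. linear_on V g \<and> (\<forall>z. H (w(s := z)) = K * g z)"
  shows "multilin V m H"
  unfolding multilin_def
proof (intro allI impI)
  fix w s x y and c :: real
  assume w: "\<forall>l<m. w l \<in> V" and s: "s < m" and x: "x \<in> V" and y: "y \<in> V"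
  obtain K g where g: "linear_on V g" and H: "\<forall>z. H (w(s := z)) = K * g z" using assms[OF w s] by blast
  show "H (w(s := x + y)) = H (w(s := x)) + H (w(s := y)) \<and> H (w(s := c *\<^sub>R x)) = c * H (w(s := x))"
    by (rule slot_lin_from[OF g _ x y]) (use H in blast)
qed

lemma FE_multilin:
  assumes e: "linear_on V \<eta>" and om: "two_form V \<omega>"
  shows "multilin V (2*n+1) (FE \<eta> \<omega> n)"
proof (rule multilin_from)
  fix w :: "nat \<Rightarrow> 'a" and s
  assume w: "\<forall>l<2*n+1. w l \<in> V" and s: "s < 2*n+1"
  have bl: "\<forall>x\<in>V. linear_on V (\<omega> x)" "\<forall>y\<in>V. linear_on V (\<lambda>x. \<omega> x y)"
    using om unfolding two_form_def bilinear_on_def by blast+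
  let ?f = "\<lambda>i w. \<omega> (w (2*i+1)) (w (2*i+2))"
  show "\<exists>K g. linear_on V g \<and> (\<forall>z. FE \<eta> \<omega> n (w(s := z)) = K * g z)"
  proof (cases "s = 0")
    case True
    have "\<forall>z. FE \<eta> \<omega> n (w(s := z)) = (\<Prod>i<n. ?f i w) * \<eta> z"
      unfolding FE_def using True by simp
    then show ?thesis using e by blast
  next
    case False
    define i0 where "i0 = (s - 1) div 2"
    have i0: "i0 < n" using False s unfolding i0_def by auto
    have oth: "\<And>i z. i < n \<Longrightarrow> i \<noteq> i0 \<Longrightarrow> ?f i (w(s := z)) = ?f i w"
    proof -
      fix i z assume "i < n" "i \<noteq> i0"
      then have "2*i+1 \<noteq> s" "2*i+2 \<noteq> s" unfolding i0_def by auto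
      then show "?f i (w(s := z)) = ?f i w" by simp
    qed
    have P: "\<And>z. FE \<eta> \<omega> n (w(s := z)) = (\<eta> (w 0) * (\<Prod>i\<in>{..<n}-{i0}. ?f i w)) * ?f i0 (w(s := z))"
      unfolding FE_def using prod_slot[of i0 n ?f w s, OF i0 oth] False by simp
    consider (a) "s = 2*i0+1" | (b) "s = 2*i0+2" using False unfolding i0_def by arith
    then show ?thesis
    proof cases
      case a
      have "w (2*i0+2) \<in> V" using w i0 by auto
      hence l: "linear_on V (\<lambda>z. \<omega> z (w (2*i0+2)))" using bl by blast
      have "\<forall>z. FE \<eta> \<omega> n (w(s := z)) = (\<eta> (w 0) * (\<Prod>i\<in>{..<n}-{i0}. ?f i w)) * \<omega> z (w (2*i0+2))"
        using P a by simp
      then show ?thesis using l by blast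
    next
      case b
      have "w (2*i0+1) \<in> V" using w i0 by auto
      hence l: "linear_on V (\<omega> (w (2*i0+1)))" using bl by blast
      have "\<forall>z. FE \<eta> \<omega> n (w(s := z)) = (\<eta> (w 0) * (\<Prod>i\<in>{..<n}-{i0}. ?f i w)) * \<omega> (w (2*i0+1)) z"
        using P b by simp
      then show ?thesis using l by blast
    qed
  qed
qed

lemma FO_multilin:
  assumes om: "two_form V \<omega>"
  shows "multilin V (2*n) (FO \<omega> n)"
proof (rule multilin_from)
  fix w :: "nat \<Rightarrow> 'a" and s
  assume w: "\<forall>l<2*n. w l \<in> V" and s: "s < 2*n"
  have bl: "\<forall>x\<in>V. linear_on V (\<omega> x)" "\<forall>y\<in>V. linear_on V (\<lambda>x. \<omega> x y)"
    using om unfolding two_form_def bilinear_on_def by blast+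
  let ?f = "\<lambda>i w. \<omega> (w (2*i)) (w (2*i+1))"
  define i0 where "i0 = s div 2"
  have i0: "i0 < n" using s unfolding i0_def by auto
  have oth: "\<And>i z. i < n \<Longrightarrow> i \<noteq> i0 \<Longrightarrow> ?f i (w(s := z)) = ?f i w"
  proof -
    fix i z assume "i < n" "i \<noteq> i0"
    then have "2*i \<noteq> s" "2*i+1 \<noteq> s" unfolding i0_def by auto
    then show "?f i (w(s := z)) = ?f i w" by simp
  qed
  have P: "\<And>z. FO \<omega> n (w(s := z)) = (\<Prod>i\<in>{..<n}-{i0}. ?f i w) * ?f i0 (w(s := z))"
    unfolding FO_def using prod_slot[of i0 n ?f w s, OF i0 oth] by simp
  consider (a) "s = 2*i0" | (b) "s = 2*i0+1" unfolding i0_def by arith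
  then show "\<exists>K g. linear_on V g \<and> (\<forall>z. FO \<omega> n (w(s := z)) = K * g z)"
  proof cases
    case a
    have "w (2*i0+1) \<in> V" using w i0 by auto
    hence l: "linear_on V (\<lambda>z. \<omega> z (w (2*i0+1)))" using bl by blast
    have "\<forall>z. FO \<omega> n (w(s := z)) = (\<Prod>i\<in>{..<n}-{i0}. ?f i w) * \<omega> z (w (2*i0+1))"
      using P a by simp
    then show ?thesis using l by blast
  next
    case b
    have "w (2*i0) \<in> V" using w i0 by auto
    hence l: "linear_on V (\<omega> (w (2*i0)))" using bl by blast
    have "\<forall>z. FO \<omega> n (w(s := z)) = (\<Prod>i\<in>{..<n}-{i0}. ?f i w) * \<omega> (w (2*i0)) z"
      using P b by simp
    then show ?thesis using l by blast
  qed
qed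

lemma Phi_multilin:
  assumes e: "linear_on V \<eta>" and om: "two_form V \<omega>"
  shows "multilin V (2*n+1) (eta_omega_pow \<eta> \<omega> n)" "alternating (2*n+1) (eta_omega_pow \<eta> \<omega> n)"
  unfolding eta_omega_pow_alt[abs_def]
  by (intro multilin_const alt_multilin FE_multilin e om, intro alternating_const alt_alternating)

lemma Psi_multilin:
  assumes om: "two_form V \<omega>"
  shows "multilin V (2*n) (omega_pow \<omega> n)" "alternating (2*n) (omega_pow \<omega> n)"
  unfolding omega_pow_alt[abs_def]
  by (intro multilin_const alt_multilin FO_multilin om, intro alternating_const alt_alternating)

lemma FE_vanish:
  assumes l: "l < 2*n+1" and wl: "w l = k" and l0: "l = 0 \<Longrightarrow> \<eta> k = 0"
    and l1: "l \<noteq> 0 \<Longrightarrow> (\<forall>y\<in>V. \<omega> k y = 0 \<and> \<omega> y k = 0)"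
    and w: "\<forall>l<2*n+1. w l \<in> V"
  shows "FE \<eta> \<omega> n w = 0"
proof (cases "l = 0")
  case True
  then show ?thesis unfolding FE_def using l0 wl by simp
next
  case False
  define i0 where "i0 = (l - 1) div 2"
  have i0: "i0 < n" using False l unfolding i0_def by auto
  have w1: "w (2*i0+1) \<in> V" "w (2*i0+2) \<in> V" using w i0 by auto
  have "l = 2*i0+1 \<or> l = 2*i0+2" using False unfolding i0_def by arith
  hence "\<omega> (w (2*i0+1)) (w (2*i0+2)) = 0" using l1[OF False] wl w1 by auto
  hence "(\<Prod>i<n. \<omega> (w (2*i+1)) (w (2*i+2))) = 0" using i0 by (intro prod_zero) auto
  then show ?thesis unfolding FE_def by simp
qed

lemma alt_vanish_upd:
  assumes j: "j < m" and v: "\<forall>l<m. v l \<in> V" and k: "k \<in> V"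
    and Z: "\<And>w l. (\<forall>l<m. w l \<in> V) \<Longrightarrow> l < m \<Longrightarrow> w l = k \<Longrightarrow> F w = 0"
  shows "alt m F (v(j := k)) = 0"
  unfolding alt_def
proof (rule sum.neutral, rule ballI)
  fix \<sigma> assume "\<sigma> \<in> {\<sigma>. \<sigma> permutes {..<m}}"
  hence p: "\<sigma> permutes {..<m}" by simp
  have l: "Hilbert_Choice.inv \<sigma> j < m" using j by (metis lessThan_iff permutes_in_image permutes_inv p)
  have "(v(j := k) \<circ> \<sigma>) (Hilbert_Choice.inv \<sigma> j) = k" using permutes_inverses(1)[OF p] by simp
  moreover have "\<forall>l<m. (v(j := k) \<circ> \<sigma>) l \<in> V"
  proof (intro allI impI)
    fix l assume "l < m"
    then have "\<sigma> l < m" using permutes_in_image[OF p] by simp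
    then show "(v(j := k) \<circ> \<sigma>) l \<in> V" using v k by simp
  qed
  ultimately have "F (v(j := k) \<circ> \<sigma>) = 0" using Z[OF _ l] by blast
  thus "of_int (sign \<sigma>) * F (v(j := k) \<circ> \<sigma>) = 0" by simp
qed




definition shiftp :: "(nat \<Rightarrow> nat) \<Rightarrow> nat \<Rightarrow> nat" where
  "shiftp \<tau> k = (case k of 0 \<Rightarrow> 0 | Suc k' \<Rightarrow> Suc (\<tau> k'))"

definition unshiftp :: "(nat \<Rightarrow> nat) \<Rightarrow> nat \<Rightarrow> nat" where
  "unshiftp \<sigma> k = \<sigma> (Suc k) - 1"

lemma shiftp_0[simp]: "shiftp \<tau> 0 = 0" and shiftp_Suc[simp]: "shiftp \<tau> (Suc k) = Suc (\<tau> k)"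
  unfolding shiftp_def by simp_all

lemma shiftp_permutes:
  assumes t: "\<tau> permutes {..<N}"
  shows "shiftp \<tau> permutes {..<Suc N}"
proof (rule bij_imp_permutes)
  have inj: "inj_on (shiftp \<tau>) {..<Suc N}"
  proof (rule inj_onI)
    fix a b assume "shiftp \<tau> a = shiftp \<tau> b"
    then show "a = b"
      using permutes_inj[OF t] by (cases a; cases b) (auto simp: inj_eq)
  qed
  have im: "shiftp \<tau> ` {..<Suc N} \<subseteq> {..<Suc N}"
  proof
    fix y assume "y \<in> shiftp \<tau> ` {..<Suc N}"
    then obtain k where k: "k < Suc N" "y = shiftp \<tau> k" by auto
    show "y \<in> {..<Suc N}"
    proof (cases k)
      case 0 then show ?thesis using k by simp
    next
      case (Suc k')
      then have "k' \<in> {..<N}" using k by simp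
      then have "\<tau> k' < N" using permutes_in_image[OF t] by simp
      then show ?thesis using k Suc by simp
    qed
  qed
  show "bij_betw (shiftp \<tau>) {..<Suc N} {..<Suc N}"
    unfolding bij_betw_def using inj endo_inj_surj[OF finite_lessThan im inj] by simp
  fix x assume "x \<notin> {..<Suc N}"
  then obtain x' where x': "x = Suc x'" "x' \<notin> {..<N}" by (cases x) auto
  then show "shiftp \<tau> x = x" using permutes_not_in[OF t x'(2)] by simp
qed

lemma unshiftp_permutes:
  assumes s: "\<sigma> permutes {..<Suc N}" and s0: "\<sigma> 0 = 0"
  shows "unshiftp \<sigma> permutes {..<N}"
proof (rule bij_imp_permutes)
  have nz: "\<And>k. \<sigma> (Suc k) \<noteq> 0"
    using permutes_inj[OF s] s0 by (metis inj_eq nat.distinct(1))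
  have inj: "inj_on (unshiftp \<sigma>) {..<N}"
  proof (rule inj_onI)
    fix a b assume "unshiftp \<sigma> a = unshiftp \<sigma> b"
    then have "\<sigma> (Suc a) = \<sigma> (Suc b)" unfolding unshiftp_def using nz[of a] nz[of b] by simp
    then show "a = b" using permutes_inj[OF s] by (simp add: inj_eq)
  qed
  have im: "unshiftp \<sigma> ` {..<N} \<subseteq> {..<N}"
  proof
    fix y assume "y \<in> unshiftp \<sigma> ` {..<N}"
    then obtain k where k: "k < N" "y = unshiftp \<sigma> k" by auto
    have "Suc k \<in> {..<Suc N}" using k by simp
    then have "\<sigma> (Suc k) < Suc N" using permutes_in_image[OF s] by simp
    then show "y \<in> {..<N}" using k nz[of k] unfolding unshiftp_def by simp
  qed
  show "bij_betw (unshiftp \<sigma>) {..<N} {..<N}"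
    unfolding bij_betw_def using inj endo_inj_surj[OF finite_lessThan im inj] by simp
  fix x assume "x \<notin> {..<N}"
  then have "Suc x \<notin> {..<Suc N}" by simp
  then show "unshiftp \<sigma> x = x" using permutes_not_in[OF s] unfolding unshiftp_def by simp
qed

lemma shiftp_unshiftp:
  assumes s: "\<sigma> permutes {..<Suc N}" and s0: "\<sigma> 0 = 0"
  shows "shiftp (unshiftp \<sigma>) = \<sigma>"
proof
  have nz: "\<And>k. \<sigma> (Suc k) \<noteq> 0"
    using permutes_inj[OF s] s0 by (metis inj_eq nat.distinct(1))
  fix k show "shiftp (unshiftp \<sigma>) k = \<sigma> k"
    using nz s0 by (cases k) (auto simp: unshiftp_def)
qed

lemma unshiftp_shiftp: "unshiftp (shiftp \<tau>) = \<tau>"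
  by (simp add: unshiftp_def fun_eq_iff)

lemma sign_shiftp:
  assumes t: "\<tau> permutes {..<N}"
  shows "sign (shiftp \<tau>) = sign \<tau>"
  using t finite_lessThan
proof (induction rule: permutes_induct)
  case id
  have e: "shiftp id = id" by (auto simp: fun_eq_iff shiftp_def split: nat.split)
  show ?case by (simp only: e)
next
  case (swap a b p)
  have e: "shiftp (Transposition.transpose a b \<circ> p) = Transposition.transpose (Suc a) (Suc b) \<circ> shiftp p"
  proof
    fix k show "shiftp (Transposition.transpose a b \<circ> p) k = (Transposition.transpose (Suc a) (Suc b) \<circ> shiftp p) k"
      by (cases k) (auto simp: Transposition.transpose_def)
  qed
  have pp: "p permutes {..<N}" using swap by blast
  have ih: "sign (shiftp p) = sign p" using swap by blast
  have ab: "a \<noteq> b" using swap by blast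
  have p1: "shiftp p permutes {..<Suc N}" using shiftp_permutes[OF pp] .
  have t1: "Transposition.transpose (Suc a) (Suc b) permutes {..<Suc N}"
    using swap(1,2) by (intro permutes_swap_id) auto
  have t0: "Transposition.transpose a b permutes {..<N}"
    using swap(1,2) by (intro permutes_swap_id) auto
  have "sign (shiftp (Transposition.transpose a b \<circ> p)) = sign (Transposition.transpose (Suc a) (Suc b)) * sign (shiftp p)"
    unfolding e by (rule sign_compose_permutes[OF t1 p1])
  also have "\<dots> = sign (Transposition.transpose a b) * sign p" using ab ih by (simp add: sign_swap_id)
  also have "\<dots> = sign (Transposition.transpose a b \<circ> p)" by (rule sign_compose_permutes[OF t0 pp, symmetric])
  finally show ?case .
qed

lemma eta_omega_pow_split:
  assumes Z: "\<And>\<sigma>. \<sigma> permutes {..<2*n+1} \<Longrightarrow> \<sigma> 0 \<noteq> 0 \<Longrightarrow> FE \<eta> \<omega> n (u \<circ> \<sigma>) = 0"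
  shows "eta_omega_pow \<eta> \<omega> n u = \<eta> (u 0) * omega_pow \<omega> n (\<lambda>i. u (Suc i))"
proof -
  let ?g = "\<lambda>\<sigma>. of_int (sign \<sigma>) * FE \<eta> \<omega> n (u \<circ> \<sigma>)"
  let ?P = "{\<sigma>. \<sigma> permutes {..<Suc (2*n)}}"
  let ?Q = "{\<sigma>. \<sigma> permutes {..<Suc (2*n)} \<and> \<sigma> 0 = 0}"
  have "alt (2*n+1) (FE \<eta> \<omega> n) u = sum ?g ?P" by (simp add: alt_def)
  also have "\<dots> = sum ?g ?Q"
  proof (rule sum.mono_neutral_right)
    show "finite ?P" by (rule finite_permutations) simp
    show "?Q \<subseteq> ?P" by blast
    show "\<forall>\<sigma>\<in>?P - ?Q. ?g \<sigma> = 0"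
    proof
      fix \<sigma> assume "\<sigma> \<in> ?P - ?Q"
      then have "\<sigma> permutes {..<2*n+1}" "\<sigma> 0 \<noteq> 0" by auto
      then show "?g \<sigma> = 0" using Z by simp
    qed
  qed
  also have "\<dots> = (\<Sum>\<tau> | \<tau> permutes {..<2*n}. ?g (shiftp \<tau>))"
  proof (rule sum.reindex_bij_witness[where i = shiftp and j = unshiftp])
    fix \<sigma> assume "\<sigma> \<in> ?Q"
    then have s: "\<sigma> permutes {..<Suc (2*n)}" "\<sigma> 0 = 0" by auto
    show "shiftp (unshiftp \<sigma>) = \<sigma>" by (rule shiftp_unshiftp[OF s])
  next
    fix \<sigma> assume "\<sigma> \<in> ?Q"
    then have s: "\<sigma> permutes {..<Suc (2*n)}" "\<sigma> 0 = 0" by auto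
    show "unshiftp \<sigma> \<in> {\<tau>. \<tau> permutes {..<2*n}}" using unshiftp_permutes[OF s] by simp
  next
    fix \<tau> assume "\<tau> \<in> {\<tau>. \<tau> permutes {..<2*n}}"
    show "unshiftp (shiftp \<tau>) = \<tau>" by (rule unshiftp_shiftp)
  next
    fix \<tau> assume "\<tau> \<in> {\<tau>. \<tau> permutes {..<2*n}}"
    then have t: "\<tau> permutes {..<2*n}" by simp
    show "shiftp \<tau> \<in> ?Q" using shiftp_permutes[OF t] by simp
  next
    fix \<sigma> assume "\<sigma> \<in> ?Q"
    then have s: "\<sigma> permutes {..<Suc (2*n)}" "\<sigma> 0 = 0" by auto
    show "?g (shiftp (unshiftp \<sigma>)) = ?g \<sigma>" by (simp only: shiftp_unshiftp[OF s])
  qed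
  also have "\<dots> = (\<Sum>\<tau> | \<tau> permutes {..<2*n}. \<eta> (u 0) * (of_int (sign \<tau>) * FO \<omega> n ((\<lambda>i. u (Suc i)) \<circ> \<tau>)))"
  proof (rule sum.cong[OF refl])
    fix \<tau> assume "\<tau> \<in> {\<tau>. \<tau> permutes {..<2*n}}"
    then have t: "\<tau> permutes {..<2*n}" by simp
    have "FE \<eta> \<omega> n (u \<circ> shiftp \<tau>) = \<eta> (u 0) * FO \<omega> n ((\<lambda>i. u (Suc i)) \<circ> \<tau>)"
    proof -
      have "\<And>i. (u \<circ> shiftp \<tau>) (2*i+1) = u (Suc (\<tau> (2*i)))" by simp
      moreover have "\<And>i. (u \<circ> shiftp \<tau>) (2*i+2) = u (Suc (\<tau> (2*i+1)))"
        by (simp add: numeral_2_eq_2)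
      ultimately show ?thesis unfolding FE_def FO_def by simp
    qed
    then show "?g (shiftp \<tau>) = \<eta> (u 0) * (of_int (sign \<tau>) * FO \<omega> n ((\<lambda>i. u (Suc i)) \<circ> \<tau>))"
      using sign_shiftp[OF t] by simp
  qed
  also have "\<dots> = \<eta> (u 0) * alt (2*n) (FO \<omega> n) (\<lambda>i. u (Suc i))"
    by (simp add: alt_def sum_distrib_left)
  finally have "alt (2*n+1) (FE \<eta> \<omega> n) u = \<eta> (u 0) * alt (2*n) (FO \<omega> n) (\<lambda>i. u (Suc i))" .
  then show ?thesis unfolding eta_omega_pow_alt omega_pow_alt by simp
qed




lemma antisym_det0:
  fixes A :: "real mat"
  assumes A: "A \<in> carrier_mat m m" and odd: "odd m" and as: "transpose_mat A = -1 \<cdot>\<^sub>m A"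
  shows "\<exists>c. c \<in> carrier_vec m \<and> c \<noteq> 0\<^sub>v m \<and> A *\<^sub>v c = 0\<^sub>v m"
proof -
  have "Determinant.det A = Determinant.det (transpose_mat A)" using det_transpose[OF A] by simp
  also have "\<dots> = (-1)^m * Determinant.det A" using as A by simp
  also have "\<dots> = - Determinant.det A" using odd by simp
  finally have "Determinant.det A = 0" by simp
  thus ?thesis using det_0_iff_vec_prod_zero[OF A] by blast
qed

lemma almost_cosymplectic_data:
  assumes "almost_cosymplectic V \<eta> \<omega> n"
  shows "linear_on V \<eta>" "two_form V \<omega>" "\<exists>v. (\<forall>i<2*n+1. v i \<in> V) \<and> eta_omega_pow \<eta> \<omega> n v \<noteq> 0"
  using assms unfolding almost_cosymplectic_def nonzero_on_def by blast+

lemma K_trivial: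
  assumes s: "subspace V" and d: "dim V = 2*n+1" and ac: "almost_cosymplectic V \<eta> \<omega> n"
    and k: "k \<in> V" "\<eta> k = 0" "\<forall>y\<in>V. \<omega> k y = 0"
  shows "k = 0"
proof -
  note D = almost_cosymplectic_data[OF ac]
  obtain v where v: "\<forall>i<2*n+1. v i \<in> V" "eta_omega_pow \<eta> \<omega> n v \<noteq> 0" using D(3) by blast
  note MA = Phi_multilin[OF D(1) D(2)]
  have k2: "\<forall>y\<in>V. \<omega> k y = 0 \<and> \<omega> y k = 0"
    using two_form_antisym[OF D(2) s _ k(1)] k(3) by fastforce
  show ?thesis
  proof (rule G_zero_vec[OF MA(1) MA(2) s v(1) v(2) d _ k(1)])
    show "0 < 2*n+1" by simp
    show "\<forall>j<2*n+1. eta_omega_pow \<eta> \<omega> n (v(j := k)) = 0"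
    proof (intro allI impI)
      fix j assume j: "j < 2*n+1"
      have "alt (2*n+1) (FE \<eta> \<omega> n) (v(j := k)) = 0"
      proof (rule alt_vanish_upd[OF j v(1) k(1)])
        fix w l assume w: "\<forall>l<2*n+1. w l \<in> V" and l: "l < 2*n+1" and wl: "w l = k"
        show "FE \<eta> \<omega> n w = 0" by (rule FE_vanish[OF l wl _ _ w]) (use k k2 in auto)
      qed
      then show "eta_omega_pow \<eta> \<omega> n (v(j := k)) = 0" unfolding eta_omega_pow_alt by simp
    qed
  qed
qed

lemma mat_vec_entry:
  fixes A :: "real mat"
  assumes "i < m" "c \<in> carrier_vec m"
  shows "(mat m m f *\<^sub>v c) $ i = (\<Sum>j<m. f (i, j) * c $ j)"
  using assms by (simp add: scalar_prod_def atLeast0LessThan)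

lemma reeb_exists:
  assumes s: "subspace V" and d: "dim V = 2*n+1" and ac: "almost_cosymplectic V \<eta> \<omega> n"
  shows "\<exists>\<xi>. reeb V \<eta> \<omega> \<xi>"
proof -
  note D = almost_cosymplectic_data[OF ac]
  obtain v where v: "\<forall>i<2*n+1. v i \<in> V" "eta_omega_pow \<eta> \<omega> n v \<noteq> 0" using D(3) by blast
  note MA = Phi_multilin[OF D(1) D(2)]
  define m where "m = 2*n+1"
  have vm: "\<forall>i<m. v i \<in> V" using v unfolding m_def by simp
  define A where "A = mat m m (\<lambda>(i,j). \<omega> (v i) (v j))"
  have A: "A \<in> carrier_mat m m" by (simp add: A_def)
  have "transpose_mat A = -1 \<cdot>\<^sub>m A"
  proof (rule eq_matI)
    fix i j assume "i < dim_row (-1 \<cdot>\<^sub>m A)" "j < dim_col (-1 \<cdot>\<^sub>m A)"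
    then have ij: "i < m" "j < m" by (auto simp: A_def)
    show "transpose_mat A $$ (i, j) = (-1 \<cdot>\<^sub>m A) $$ (i, j)"
      using ij two_form_antisym[OF D(2) s, of "v j" "v i"] vm by (simp add: A_def)
  qed (auto simp: A_def)
  from antisym_det0[OF A _ this] obtain c where c: "c \<in> carrier_vec m" "c \<noteq> 0\<^sub>v m" "A *\<^sub>v c = 0\<^sub>v m"
    unfolding m_def by auto
  define x where "x = (\<Sum>j<m. (c $ j) *\<^sub>R v j)"
  have xV: "x \<in> V" unfolding x_def using vm by (intro subspace_sum[OF s] subspace_scale[OF s]) auto
  have xi: "\<forall>i<m. \<omega> (v i) x = 0"
  proof (intro allI impI)
    fix i assume i: "i < m"
    have l: "linear_on V (\<omega> (v i))" using D(2) vm i unfolding two_form_def bilinear_on_def by blast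
    have "\<omega> (v i) x = (\<Sum>j<m. (c $ j) *\<^sub>R \<omega> (v i) (v j))"
      unfolding x_def by (rule linear_on_sum[OF l s]) (use vm in auto)
    also have "\<dots> = (A *\<^sub>v c) $ i" unfolding A_def using mat_vec_entry[OF i c(1)] by (simp add: mult.commute)
    also have "\<dots> = 0" using c(3) i by simp
    finally show "\<omega> (v i) x = 0" .
  qed
  have xy: "\<forall>y\<in>V. \<omega> x y = 0"
  proof
    fix y assume y: "y \<in> V"
    obtain e where e: "y = (\<Sum>i<m. e i *\<^sub>R v i)"
      using G_basis[OF MA(1) MA(2) s v(1) v(2) d _ y] unfolding m_def by auto
    have l: "linear_on V (\<lambda>z. \<omega> z x)" using D(2) xV unfolding two_form_def bilinear_on_def by blast
    have "\<omega> y x = (\<Sum>i<m. e i *\<^sub>R \<omega> (v i) x)" unfolding e by (rule linear_on_sum[OF l s]) (use vm in auto)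
    also have "\<dots> = 0" using xi by simp
    finally show "\<omega> x y = 0" using two_form_antisym[OF D(2) s xV y] by simp
  qed
  have xnz: "x \<noteq> 0"
  proof
    assume x0: "x = 0"
    have "\<forall>j<m. c $ j = 0"
    proof (intro allI impI)
      fix j assume j: "j < m"
      have "eta_omega_pow \<eta> \<omega> n (v(j := x)) = c $ j * eta_omega_pow \<eta> \<omega> n v"
        unfolding x_def using G_rep[OF MA(1) MA(2) s v(1), of j "\<lambda>i. c $ i"] j unfolding m_def by simp
      moreover have "eta_omega_pow \<eta> \<omega> n (v(j := 0)) = 0"
        using G_sum[OF MA(1) s v(1), of j "{}"] j unfolding m_def by simp
      ultimately show "c $ j = 0" using x0 v(2) by simp
    qed
    hence "c = 0\<^sub>v m" using c(1) by (intro eq_vecI) auto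
    with c(2) show False by simp
  qed
  have ex: "\<eta> x \<noteq> 0" using K_trivial[OF s d ac xV _ xy] xnz by blast
  define \<xi> where "\<xi> = (1 / \<eta> x) *\<^sub>R x"
  have "reeb V \<eta> \<omega> \<xi>" unfolding reeb_def
  proof (intro conjI ballI)
    show "\<xi> \<in> V" unfolding \<xi>_def using xV by (rule subspace_scale[OF s])
    show "\<eta> \<xi> = 1" unfolding \<xi>_def using linear_on_scale[OF D(1) xV] ex by simp
    fix y assume y: "y \<in> V"
    have l: "linear_on V (\<lambda>z. \<omega> z y)" using D(2) y unfolding two_form_def bilinear_on_def by blast
    show "\<omega> \<xi> y = 0" unfolding \<xi>_def using linear_on_scale[OF l xV] xy y by simp
  qed
  thus ?thesis by blast
qed

lemma reeb_unique:
  assumes s: "subspace V" and d: "dim V = 2*n+1" and ac: "almost_cosymplectic V \<eta> \<omega> n"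
    and r1: "reeb V \<eta> \<omega> \<xi>1" and r2: "reeb V \<eta> \<omega> \<xi>2"
  shows "\<xi>1 = \<xi>2"
proof -
  note D = almost_cosymplectic_data[OF ac]
  have x: "\<xi>1 \<in> V" "\<xi>2 \<in> V" using r1 r2 unfolding reeb_def by auto
  have kV: "\<xi>1 - \<xi>2 \<in> V" using x by (rule subspace_diff[OF s])
  have "\<eta> (\<xi>1 - \<xi>2) = 0" using linear_on_diff[OF D(1) s x] r1 r2 unfolding reeb_def by simp
  moreover have "\<forall>y\<in>V. \<omega> (\<xi>1 - \<xi>2) y = 0"
  proof
    fix y assume y: "y \<in> V"
    have l: "linear_on V (\<lambda>z. \<omega> z y)" using D(2) y unfolding two_form_def bilinear_on_def by blast
    show "\<omega> (\<xi>1 - \<xi>2) y = 0" using linear_on_diff[OF l s x] r1 r2 y unfolding reeb_def by simp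
  qed
  ultimately have "\<xi>1 - \<xi>2 = 0" using K_trivial[OF s d ac kV] by blast
  thus ?thesis by simp
qed




lemma subspace_ker:
  assumes s: "subspace V" and e: "linear_on V \<eta>"
  shows "subspace {x\<in>V. \<eta> x = 0}"
proof (rule subspaceI)
  show "0 \<in> {x\<in>V. \<eta> x = 0}" using subspace_0[OF s] linear_on_0[OF e s] by simp
next
  fix x y assume "x \<in> {x\<in>V. \<eta> x = 0}" "y \<in> {x\<in>V. \<eta> x = 0}"
  then show "x + y \<in> {x\<in>V. \<eta> x = 0}" using subspace_add[OF s] linear_on_add[OF e] by simp
next
  fix c x assume "x \<in> {x\<in>V. \<eta> x = 0}"
  then show "c *\<^sub>R x \<in> {x\<in>V. \<eta> x = 0}" using subspace_scale[OF s] linear_on_scale[OF e] by simp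
qed

lemma bilinear_on_subset: "bilinear_on V B \<Longrightarrow> H \<subseteq> V \<Longrightarrow> bilinear_on H B"
  unfolding bilinear_on_def linear_on_def by blast

lemma two_form_subset: "two_form V \<omega> \<Longrightarrow> H \<subseteq> V \<Longrightarrow> two_form H \<omega>"
  unfolding two_form_def using bilinear_on_subset by blast

lemma lin_comb:
  assumes g: "linear_on V g" and s: "subspace V" and x: "x \<in> V" and y: "y \<in> V"
  shows "g (a *\<^sub>R x + y) = a *\<^sub>R g x + g y"
proof -
  have "a *\<^sub>R x \<in> V" using x by (rule subspace_scale[OF s])
  then show ?thesis using linear_on_add[OF g _ y] linear_on_scale[OF g x] by simp
qed

lemma dim_hyperplane:
  fixes \<eta> :: "'a::real_vector \<Rightarrow> real"
  assumes s: "subspace V" and d: "dim V = Suc N" and H: "H = {x\<in>V. \<eta> x = 0}"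
    and e: "linear_on V \<eta>" and xi: "\<xi> \<in> V" "\<eta> \<xi> = 1"
  shows "dim H = N"
proof -
  have sH: "subspace H" unfolding H by (rule subspace_ker[OF s e])
  have HV: "H \<subseteq> V" unfolding H by blast
  obtain BV where BV: "BV \<subseteq> V" "independent BV" "V \<subseteq> span BV" "card BV = dim V" by (rule basis_exists)
  have finBV: "finite BV" using BV(4) d by (intro card_ge_0_finite) simp
  obtain BH where BH: "BH \<subseteq> H" "independent BH" "H \<subseteq> span BH" "card BH = dim H" by (rule basis_exists)
  have bhs: "BH \<subseteq> span BV" using BH(1) HV BV(3) by (meson order_trans)
  have finBH: "finite BH" using independent_span_bound[OF finBV BH(2) bhs] by (rule conjunct1)
  have spH: "span BH \<subseteq> H" using BH(1) sH by (rule span_minimal)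
  have xin: "\<xi> \<notin> span BH"
  proof
    assume "\<xi> \<in> span BH"
    then have "\<xi> \<in> H" using spH by (rule subsetD[rotated])
    then show False using xi unfolding H by simp
  qed
  have ind: "independent (insert \<xi> BH)" by (rule independent_insertI[OF xin BH(2)])
  have sub: "insert \<xi> BH \<subseteq> V" using BH(1) HV xi(1) by blast
  have spn: "V \<subseteq> span (insert \<xi> BH)"
  proof
    fix x assume x: "x \<in> V"
    have ex: "\<eta> x *\<^sub>R \<xi> \<in> V" using xi(1) by (rule subspace_scale[OF s])
    have "x - \<eta> x *\<^sub>R \<xi> \<in> V" using x ex by (rule subspace_diff[OF s])
    moreover have "\<eta> (x - \<eta> x *\<^sub>R \<xi>) = 0"
      using linear_on_diff[OF e s x ex] linear_on_scale[OF e xi(1)] xi(2) by simp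
    ultimately have "x - \<eta> x *\<^sub>R \<xi> \<in> H" unfolding H by simp
    then have "x - \<eta> x *\<^sub>R \<xi> \<in> span BH" by (rule subsetD[OF BH(3)])
    then have 1: "x - \<eta> x *\<^sub>R \<xi> \<in> span (insert \<xi> BH)" using span_mono[of BH "insert \<xi> BH"] by (rule subsetD[rotated]) (rule subset_insertI)
    have "\<xi> \<in> span (insert \<xi> BH)" by (rule span_base) (rule insertI1)
    then have 2: "\<eta> x *\<^sub>R \<xi> \<in> span (insert \<xi> BH)" by (rule span_scale)
    have "x = \<eta> x *\<^sub>R \<xi> + (x - \<eta> x *\<^sub>R \<xi>)" by simp
    also have "\<dots> \<in> span (insert \<xi> BH)" using 2 1 by (rule span_add)
    finally show "x \<in> span (insert \<xi> BH)" .
  qed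
  have "\<xi> \<notin> BH" using xin span_base by metis
  then have "card (insert \<xi> BH) = Suc (dim H)" using finBH BH(4) by simp
  then have "dim V = Suc (dim H)" using dim_unique[OF sub spn ind] by simp
  then show ?thesis using d by simp
qed

lemma dim_ext:
  assumes s: "subspace H" and d: "dim H = Suc N"
  shows "dim (ext_carrier H) = Suc (Suc N)"
proof -
  obtain BH where BH: "BH \<subseteq> H" "independent BH" "H \<subseteq> span BH" "card BH = dim H" by (rule basis_exists)
  have finBH: "finite BH" using BH(4) d by (intro card_ge_0_finite) simp
  let ?f = "\<lambda>x::'a. (0::real, x)"
  have lf: "linear ?f" by (rule linearI) simp_all
  have injf: "inj ?f" by (rule injI) simp
  let ?B = "insert (1, 0) (?f ` BH)"
  have spf: "span (?f ` BH) = ?f ` span BH" by (rule span_linear_image[OF lf])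
  have indf: "independent (?f ` BH)"
    by (rule linear_independent_injective_image[OF lf BH(2)]) (use injf in \<open>simp add: inj_on_def\<close>)
  have n1: "(1::real, 0::'a) \<notin> span (?f ` BH)" unfolding spf by auto
  have ind: "independent ?B" by (rule independent_insertI[OF n1 indf])
  have sub: "?B \<subseteq> ext_carrier H" using BH(1) subspace_0[OF s] unfolding ext_carrier_def by auto
  have spn: "ext_carrier H \<subseteq> span ?B"
  proof
    fix p assume "p \<in> ext_carrier H"
    then have ph: "snd p \<in> H" unfolding ext_carrier_def by simp
    have "?f (snd p) \<in> ?f ` span BH" using BH(3) ph by blast
    then have "?f (snd p) \<in> span (?f ` BH)" unfolding spf .
    then have 1: "?f (snd p) \<in> span ?B" using span_mono[of "?f ` BH" ?B] by (rule subsetD[rotated]) (rule subset_insertI)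
    have "(1::real, 0::'a) \<in> span ?B" by (rule span_base) (rule insertI1)
    then have 2: "fst p *\<^sub>R (1::real, 0::'a) \<in> span ?B" by (rule span_scale)
    have "p = fst p *\<^sub>R (1::real, 0::'a) + ?f (snd p)" by (simp add: prod_eq_iff)
    also have "\<dots> \<in> span ?B" using 2 1 by (rule span_add)
    finally show "p \<in> span ?B" .
  qed
  have n2: "(1::real, 0::'a) \<notin> ?f ` BH" by auto
  have "card ?B = Suc (card BH)" using n2 finBH card_image[OF inj_on_subset[OF injf subset_UNIV]] by simp
  then show ?thesis using dim_unique[OF sub spn ind] BH(4) d by simp
qed




lemma sum3_zero:
  assumes h: "a + b + c = (0::'a::ab_group_add)"
  shows "a = - b - c"
proof -
  have "a = (a + b + c) - b - c" by simp
  also have "\<dots> = - b - c" using h by simp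
  finally show ?thesis .
qed

lemma proj_omega:
  fixes \<omega> :: "'a::real_vector \<Rightarrow> 'a \<Rightarrow> real"
  assumes om: "two_form V \<omega>" and s: "subspace V" and a: "a \<in> V" and b: "b \<in> V" and xi: "\<xi> \<in> V"
    and z: "\<forall>y\<in>V. \<omega> \<xi> y = 0 \<and> \<omega> y \<xi> = 0"
  shows "\<omega> (a - p *\<^sub>R \<xi>) (b - q *\<^sub>R \<xi>) = \<omega> a b"
proof -
  have pxi: "p *\<^sub>R \<xi> \<in> V" "q *\<^sub>R \<xi> \<in> V" using xi by (auto intro: subspace_scale[OF s])
  have b': "b - q *\<^sub>R \<xi> \<in> V" using b pxi(2) by (rule subspace_diff[OF s])
  have l2: "linear_on V (\<lambda>x. \<omega> x (b - q *\<^sub>R \<xi>))" using om b' unfolding two_form_def bilinear_on_def by blast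
  have l1: "linear_on V (\<omega> a)" using om a unfolding two_form_def bilinear_on_def by blast
  have "\<omega> (a - p *\<^sub>R \<xi>) (b - q *\<^sub>R \<xi>) = \<omega> a (b - q *\<^sub>R \<xi>) - p *\<^sub>R \<omega> \<xi> (b - q *\<^sub>R \<xi>)"
    using linear_on_diff[OF l2 s a pxi(1)] linear_on_scale[OF l2 xi] by simp
  also have "\<dots> = \<omega> a (b - q *\<^sub>R \<xi>)" using z b' by simp
  also have "\<dots> = \<omega> a b - q *\<^sub>R \<omega> a \<xi>" using linear_on_diff[OF l1 s b pxi(2)] linear_on_scale[OF l1 xi] by simp
  also have "\<dots> = \<omega> a b" using z a by simp
  finally show ?thesis .
qed

lemma nonzero_restrict:
  fixes V :: "'a::real_vector set" and \<eta> :: "'a \<Rightarrow> real"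
  assumes s: "subspace V" and d: "dim V = 2*n+1" and ac: "almost_cosymplectic V \<eta> \<omega> n"
    and xi: "\<xi> \<in> V" "\<eta> \<xi> = 1" and z: "\<forall>y\<in>V. \<omega> \<xi> y = 0 \<and> \<omega> y \<xi> = 0"
  shows "nonzero_on {x\<in>V. \<eta> x = 0} (2*n) (omega_pow \<omega> n)"
proof -
  note D = almost_cosymplectic_data[OF ac]
  obtain v where v: "\<forall>i<2*n+1. v i \<in> V" "eta_omega_pow \<eta> \<omega> n v \<noteq> 0" using D(3) by blast
  note MA = Phi_multilin[OF D(1) D(2)]
  have xnz: "\<xi> \<noteq> 0" using xi(2) linear_on_0[OF D(1) s] by auto
  obtain j where j: "j < 2*n+1" "eta_omega_pow \<eta> \<omega> n (v(j := \<xi>)) \<noteq> 0"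
  proof (rule ccontr)
    assume "\<not> thesis"
    with that have "\<forall>j<2*n+1. eta_omega_pow \<eta> \<omega> n (v(j := \<xi>)) = 0" by blast
    from G_zero_vec[OF MA(1) MA(2) s v(1) v(2) d _ xi(1) this] xnz show False by simp
  qed
  let ?t = "Transposition.transpose 0 j"
  define u where "u = v(j := \<xi>) \<circ> ?t"
  have t: "?t permutes {..<2*n+1}" using j(1) by (intro permutes_swap_id) auto
  have "eta_omega_pow \<eta> \<omega> n u = of_int (sign ?t) * eta_omega_pow \<eta> \<omega> n (v(j := \<xi>))"
    unfolding u_def eta_omega_pow_alt alt_perm[OF t] by simp
  moreover have "sign ?t = 1 \<or> sign ?t = -1" by (simp add: sign_swap_id)
  ultimately have un: "eta_omega_pow \<eta> \<omega> n u \<noteq> 0" using j(2) by auto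
  have u0: "u 0 = \<xi>" unfolding u_def by simp
  have uV: "\<forall>l<2*n+1. u l \<in> V"
  proof (intro allI impI)
    fix l assume l: "l < 2*n+1"
    then have "?t l < 2*n+1" using permutes_in_image[OF t] by simp
    then show "u l \<in> V" unfolding u_def using v(1) xi(1) by simp
  qed
  have split: "eta_omega_pow \<eta> \<omega> n u = \<eta> (u 0) * omega_pow \<omega> n (\<lambda>i. u (Suc i))"
  proof (rule eta_omega_pow_split)
    fix \<sigma> assume p: "\<sigma> permutes {..<2*n+1}" and s0: "\<sigma> 0 \<noteq> 0"
    define l where "l = Hilbert_Choice.inv \<sigma> 0"
    have "(0::nat) \<in> {..<2*n+1}" by simp
    then have "l \<in> {..<2*n+1}" unfolding l_def using permutes_in_image[OF permutes_inv[OF p], of 0] by simp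
    then have l: "l < 2*n+1" by simp
    have sl: "\<sigma> l = 0" unfolding l_def using permutes_inverses(1)[OF p] .
    have l0: "l \<noteq> 0"
    proof
      assume "l = 0"
      with sl s0 show False by simp
    qed
    have wl: "(u \<circ> \<sigma>) l = \<xi>" using sl u0 by simp
    have w: "\<forall>l<2*n+1. (u \<circ> \<sigma>) l \<in> V"
    proof (intro allI impI)
      fix k assume "k < 2*n+1"
      then have "\<sigma> k < 2*n+1" using permutes_in_image[OF p] by simp
      then show "(u \<circ> \<sigma>) k \<in> V" using uV by simp
    qed
    have a1: "l = 0 \<Longrightarrow> \<eta> \<xi> = 0" using l0 by simp
    have a2: "l \<noteq> 0 \<Longrightarrow> \<forall>y\<in>V. \<omega> \<xi> y = 0 \<and> \<omega> y \<xi> = 0" using z by simp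
    show "FE \<eta> \<omega> n (u \<circ> \<sigma>) = 0" by (rule FE_vanish[where w="u \<circ> \<sigma>" and k=\<xi> and V=V and \<eta>=\<eta> and \<omega>=\<omega> and n=n, OF l wl a1 a2 w])
  qed
  have pn: "omega_pow \<omega> n (\<lambda>i. u (Suc i)) \<noteq> 0" using un split u0 xi(2) by simp
  define w where "w = (\<lambda>i. u (Suc i) - \<eta> (u (Suc i)) *\<^sub>R \<xi>)"
  have wH: "\<forall>i<2*n. w i \<in> {x\<in>V. \<eta> x = 0}"
  proof (intro allI impI)
    fix i assume "i < 2*n"
    then have uv: "u (Suc i) \<in> V" using uV by simp
    have ex: "\<eta> (u (Suc i)) *\<^sub>R \<xi> \<in> V" using xi(1) by (rule subspace_scale[OF s])
    have "w i \<in> V" unfolding w_def using uv ex by (rule subspace_diff[OF s])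
    moreover have "\<eta> (w i) = 0" unfolding w_def
      using linear_on_diff[OF D(1) s uv ex] linear_on_scale[OF D(1) xi(1)] xi(2) by simp
    ultimately show "w i \<in> {x\<in>V. \<eta> x = 0}" by simp
  qed
  have "omega_pow \<omega> n w = omega_pow \<omega> n (\<lambda>i. u (Suc i))"
    unfolding omega_pow_alt alt_def
  proof (rule arg_cong2[where f="(*)"], rule refl, rule sum.cong[OF refl])
    fix \<sigma> assume "\<sigma> \<in> {\<sigma>. \<sigma> permutes {..<2*n}}"
    then have p: "\<sigma> permutes {..<2*n}" by simp
    have "FO \<omega> n (w \<circ> \<sigma>) = FO \<omega> n ((\<lambda>i. u (Suc i)) \<circ> \<sigma>)"
      unfolding FO_def
    proof (rule prod.cong[OF refl])
      fix i assume "i \<in> {..<n}"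
      then have "2*i < 2*n" "2*i+1 < 2*n" by auto
      then have "\<sigma> (2*i) < 2*n" "\<sigma> (2*i+1) < 2*n" using permutes_in_image[OF p] by auto
      then have a: "u (Suc (\<sigma> (2*i))) \<in> V" "u (Suc (\<sigma> (2*i+1))) \<in> V" using uV by auto
      show "\<omega> ((w \<circ> \<sigma>) (2*i)) ((w \<circ> \<sigma>) (2*i+1)) = \<omega> (((\<lambda>i. u (Suc i)) \<circ> \<sigma>) (2*i)) (((\<lambda>i. u (Suc i)) \<circ> \<sigma>) (2*i+1))"
        unfolding w_def o_def by (rule proj_omega[OF D(2) s a xi(1) z])
    qed
    then show "of_int (sign \<sigma>) * FO \<omega> n (w \<circ> \<sigma>) = of_int (sign \<sigma>) * FO \<omega> n ((\<lambda>i. u (Suc i)) \<circ> \<sigma>)" by simp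
  qed
  then have "omega_pow \<omega> n w \<noteq> 0" using pn by simp
  then show ?thesis unfolding nonzero_on_def using wH by blast
qed




lemma part1:
  fixes V :: "'a::real_vector set" and \<eta> :: "'a \<Rightarrow> real"
  assumes L: "lie_algebra V B" and d: "dim V = 2*n+1" and ac: "alpha_cosymplectic V B \<eta> \<omega> \<alpha> n"
    and r: "reeb V \<eta> \<omega> \<xi>"
  defines "H \<equiv> {x \<in> V. \<eta> x = 0}"
  shows "lie_algebra H B \<and> dim H = 2*n \<and> symplectic H B \<omega> n \<and> derivation H B (B \<xi>)
          \<and> inf_symplectic H \<omega> (\<lambda>x. B \<xi> x + \<alpha> *\<^sub>R x)
          \<and> bij_betw (\<lambda>p. fst p *\<^sub>R \<xi> + snd p) (ext_carrier H) V
          \<and> (\<forall>p\<in>ext_carrier H. \<forall>q\<in>ext_carrier H.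
                fst (ext_br B (B \<xi>) p q) *\<^sub>R \<xi> + snd (ext_br B (B \<xi>) p q)
                  = B (fst p *\<^sub>R \<xi> + snd p) (fst q *\<^sub>R \<xi> + snd q)
              \<and> \<eta> (fst p *\<^sub>R \<xi> + snd p) = ext_eta p
              \<and> \<omega> (fst p *\<^sub>R \<xi> + snd p) (fst q *\<^sub>R \<xi> + snd q) = ext_omega \<omega> p q)"
proof -
  have s: "subspace V" and cl: "\<forall>x\<in>V. \<forall>y\<in>V. B x y \<in> V" and bl: "bilinear_on V B"
    and al: "\<forall>x\<in>V. B x x = 0"
    and jac: "\<forall>x\<in>V. \<forall>y\<in>V. \<forall>z\<in>V. B x (B y z) + B y (B z x) + B z (B x y) = 0"
    using L unfolding lie_algebra_def by blast+
  have acs: "almost_cosymplectic V \<eta> \<omega> n" and d1: "\<forall>x\<in>V. \<forall>y\<in>V. \<eta> (B x y) = 0"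
    and d2e: "\<forall>x\<in>V. \<forall>y\<in>V. \<forall>z\<in>V. d2 B \<omega> x y z = 2 * \<alpha> * wedge12 \<eta> \<omega> x y z"
    using ac unfolding alpha_cosymplectic_def d1_def by auto
  note D = almost_cosymplectic_data[OF acs]
  have e: "linear_on V \<eta>" and om: "two_form V \<omega>" using D by blast+
  have lB1: "\<forall>x\<in>V. linear_on V (B x)" and lB2: "\<forall>y\<in>V. linear_on V (\<lambda>x. B x y)"
    using bl unfolding bilinear_on_def by blast+
  have lw1: "\<forall>x\<in>V. linear_on V (\<omega> x)" and lw2: "\<forall>y\<in>V. linear_on V (\<lambda>x. \<omega> x y)"
    using om unfolding two_form_def bilinear_on_def by blast+
  have xi: "\<xi> \<in> V" "\<eta> \<xi> = 1" "\<forall>y\<in>V. \<omega> \<xi> y = 0" using r unfolding reeb_def by blast+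
  have xi2: "\<forall>y\<in>V. \<omega> y \<xi> = 0" using two_form_antisym[OF om s _ xi(1)] xi(3) by fastforce
  have z: "\<forall>y\<in>V. \<omega> \<xi> y = 0 \<and> \<omega> y \<xi> = 0" using xi(3) xi2 by blast
  have HV: "H \<subseteq> V" unfolding H_def by blast
  have sH: "subspace H" unfolding H_def by (rule subspace_ker[OF s e])
  have inH: "\<And>x. x \<in> H \<longleftrightarrow> x \<in> V \<and> \<eta> x = 0" unfolding H_def by simp
  have BH: "\<forall>x\<in>H. \<forall>y\<in>H. B x y \<in> H" using cl d1 inH by simp
  have antB: "\<And>x y. x \<in> V \<Longrightarrow> y \<in> V \<Longrightarrow> B x y = - B y x" using lie_antisym[OF L] by blast
  have antw: "\<And>x y. x \<in> V \<Longrightarrow> y \<in> V \<Longrightarrow> \<omega> x y = - \<omega> y x" using two_form_antisym[OF om s] by blast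
  have P1: "lie_algebra H B"
    unfolding lie_algebra_def using sH BH bilinear_on_subset[OF bl HV] al jac HV by blast
  have P2: "dim H = 2*n" using dim_hyperplane[OF s _ H_def[THEN meta_eq_to_obj_eq] e xi(1) xi(2)] d by simp
  have P3: "symplectic H B \<omega> n"
    unfolding symplectic_def
  proof (intro conjI)
    show "two_form H \<omega>" by (rule two_form_subset[OF om HV])
    show "\<forall>x\<in>H. \<forall>y\<in>H. \<forall>z\<in>H. d2 B \<omega> x y z = 0"
      using d2e inH unfolding wedge12_def by simp
    show "nonzero_on H (2*n) (omega_pow \<omega> n)"
      unfolding H_def by (rule nonzero_restrict[OF s d acs xi(1) xi(2) z])
  qed
  have P4: "derivation H B (B \<xi>)"
    unfolding derivation_def
  proof (intro conjI ballI)
    fix x assume "x \<in> H"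
    then show "B \<xi> x \<in> H" using cl d1 xi(1) inH by simp
  next
    show "linear_on H (B \<xi>)" using linear_on_subset[OF _ HV] lB1 xi(1) by blast
  next
    fix x y assume x: "x \<in> H" and y: "y \<in> H"
    have xv: "x \<in> V" and yv: "y \<in> V" using x y HV by auto
    have j: "B \<xi> (B x y) + B x (B y \<xi>) + B y (B \<xi> x) = 0" using jac xi(1) xv yv by blast
    have e1: "B x (B y \<xi>) = - B x (B \<xi> y)"
      using antB[OF yv xi(1)] linear_on_neg[of V "B x" "B \<xi> y"] lB1 xv cl xi(1) yv by simp
    have e2: "B y (B \<xi> x) = - B (B \<xi> x) y" using antB[OF yv] cl xi(1) xv by simp
    show "B \<xi> (B x y) = B (B \<xi> x) y + B x (B \<xi> y)"
      using sum3_zero[OF j] unfolding e1 e2 by (simp add: algebra_simps)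
  qed
  have key: "\<And>a b. a \<in> H \<Longrightarrow> b \<in> H \<Longrightarrow> - \<omega> (B \<xi> a) b + \<omega> (B \<xi> b) a = 2 * \<alpha> * \<omega> a b"
  proof -
    fix a b assume a: "a \<in> H" and b: "b \<in> H"
    have av: "a \<in> V" and bv: "b \<in> V" and ea: "\<eta> a = 0" and eb: "\<eta> b = 0" using a b inH by auto
    have "d2 B \<omega> \<xi> a b = 2 * \<alpha> * wedge12 \<eta> \<omega> \<xi> a b" using d2e xi(1) av bv by blast
    moreover have "wedge12 \<eta> \<omega> \<xi> a b = \<omega> a b" unfolding wedge12_def using xi(2) ea eb by simp
    moreover have "\<omega> (B a b) \<xi> = 0" using xi2 cl av bv by blast
    moreover have "\<omega> (B b \<xi>) a = - \<omega> (B \<xi> b) a"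
    proof -
      have "B b \<xi> = - B \<xi> b" using antB[OF bv xi(1)] .
      moreover have "\<omega> (- B \<xi> b) a = - \<omega> (B \<xi> b) a"
        using linear_on_neg[of V "\<lambda>x. \<omega> x a" "B \<xi> b"] lw2 av cl xi(1) bv by simp
      ultimately show ?thesis by simp
    qed
    ultimately show "- \<omega> (B \<xi> a) b + \<omega> (B \<xi> b) a = 2 * \<alpha> * \<omega> a b" unfolding d2_def by simp
  qed
  have P5: "inf_symplectic H \<omega> (\<lambda>x. B \<xi> x + \<alpha> *\<^sub>R x)"
    unfolding inf_symplectic_def
  proof (intro conjI ballI)
    fix x assume x: "x \<in> H"
    have "B \<xi> x \<in> H" using cl d1 xi(1) inH x by simp
    moreover have "\<alpha> *\<^sub>R x \<in> H" using x by (rule subspace_scale[OF sH])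
    ultimately show "B \<xi> x + \<alpha> *\<^sub>R x \<in> H" by (rule subspace_add[OF sH])
  next
    have l: "linear_on V (B \<xi>)" using lB1 xi(1) by blast
    show "linear_on H (\<lambda>x. B \<xi> x + \<alpha> *\<^sub>R x)"
      unfolding linear_on_def
    proof (intro ballI allI conjI)
      fix x y and c :: real assume x: "x \<in> H" and y: "y \<in> H"
      have xv: "x \<in> V" and yv: "y \<in> V" using x y HV by auto
      show "B \<xi> (x + y) + \<alpha> *\<^sub>R (x + y) = (B \<xi> x + \<alpha> *\<^sub>R x) + (B \<xi> y + \<alpha> *\<^sub>R y)"
        using linear_on_add[OF l xv yv] by (simp add: algebra_simps)
      show "B \<xi> (c *\<^sub>R x) + \<alpha> *\<^sub>R (c *\<^sub>R x) = c *\<^sub>R (B \<xi> x + \<alpha> *\<^sub>R x)"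
        using linear_on_scale[OF l xv] by (simp add: algebra_simps)
    qed
  next
    fix x y assume x: "x \<in> H" and y: "y \<in> H"
    have xv: "x \<in> V" and yv: "y \<in> V" using x y HV by auto
    have bx: "B \<xi> x \<in> V" "B \<xi> y \<in> V" using cl xi(1) xv yv by auto
    have ax: "\<alpha> *\<^sub>R x \<in> V" "\<alpha> *\<^sub>R y \<in> V" using xv yv by (auto intro: subspace_scale[OF s])
    have ly: "linear_on V (\<lambda>z. \<omega> z y)" and lx: "linear_on V (\<lambda>z. \<omega> z x)" using lw2 xv yv by auto
    have 1: "\<omega> (B \<xi> x + \<alpha> *\<^sub>R x) y = \<omega> (B \<xi> x) y + \<alpha> * \<omega> x y"
      using linear_on_add[OF ly bx(1) ax(1)] linear_on_scale[OF ly xv] by simp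
    have 2: "\<omega> (B \<xi> y + \<alpha> *\<^sub>R y) x = \<omega> (B \<xi> y) x + \<alpha> * \<omega> y x"
      using linear_on_add[OF lx bx(2) ax(2)] linear_on_scale[OF lx yv] by simp
    have 3: "- \<omega> (B \<xi> y) x + \<omega> (B \<xi> x) y = 2 * \<alpha> * \<omega> y x" using key[OF y x] .
    have 4: "\<omega> y x = - \<omega> x y" using antw[OF yv xv] .
    show "\<omega> (B \<xi> x + \<alpha> *\<^sub>R x) y = \<omega> (B \<xi> y + \<alpha> *\<^sub>R y) x"
      unfolding 1 2 using 3 4 by (simp add: algebra_simps)
  qed
  have P6: "bij_betw (\<lambda>p. fst p *\<^sub>R \<xi> + snd p) (ext_carrier H) V"
  proof (rule bij_betw_byWitness[where f'="\<lambda>x. (\<eta> x, x - \<eta> x *\<^sub>R \<xi>)"])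
    show "\<forall>a\<in>ext_carrier H. (\<eta> (fst a *\<^sub>R \<xi> + snd a), fst a *\<^sub>R \<xi> + snd a - \<eta> (fst a *\<^sub>R \<xi> + snd a) *\<^sub>R \<xi>) = a"
    proof
      fix a assume "a \<in> ext_carrier H"
      then have h: "snd a \<in> V" "\<eta> (snd a) = 0" unfolding ext_carrier_def using inH by auto
      have "\<eta> (fst a *\<^sub>R \<xi> + snd a) = fst a" using lin_comb[OF e s xi(1) h(1)] xi(2) h(2) by simp
      then show "(\<eta> (fst a *\<^sub>R \<xi> + snd a), fst a *\<^sub>R \<xi> + snd a - \<eta> (fst a *\<^sub>R \<xi> + snd a) *\<^sub>R \<xi>) = a"
        by (simp add: prod_eq_iff)
    qed
    show "\<forall>a'\<in>V. fst (\<eta> a', a' - \<eta> a' *\<^sub>R \<xi>) *\<^sub>R \<xi> + snd (\<eta> a', a' - \<eta> a' *\<^sub>R \<xi>) = a'" by simp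
    show "(\<lambda>p. fst p *\<^sub>R \<xi> + snd p) ` ext_carrier H \<subseteq> V"
    proof
      fix y assume "y \<in> (\<lambda>p. fst p *\<^sub>R \<xi> + snd p) ` ext_carrier H"
      then obtain p where p: "snd p \<in> H" "y = fst p *\<^sub>R \<xi> + snd p" unfolding ext_carrier_def by auto
      have "fst p *\<^sub>R \<xi> \<in> V" using xi(1) by (rule subspace_scale[OF s])
      moreover have "snd p \<in> V" using p(1) HV by auto
      ultimately show "y \<in> V" unfolding p(2) by (rule subspace_add[OF s])
    qed
    show "(\<lambda>x. (\<eta> x, x - \<eta> x *\<^sub>R \<xi>)) ` V \<subseteq> ext_carrier H"
    proof
      fix y assume "y \<in> (\<lambda>x. (\<eta> x, x - \<eta> x *\<^sub>R \<xi>)) ` V"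
      then obtain x where x: "x \<in> V" "y = (\<eta> x, x - \<eta> x *\<^sub>R \<xi>)" by auto
      have ex: "\<eta> x *\<^sub>R \<xi> \<in> V" using xi(1) by (rule subspace_scale[OF s])
      have "x - \<eta> x *\<^sub>R \<xi> \<in> V" using x(1) ex by (rule subspace_diff[OF s])
      moreover have "\<eta> (x - \<eta> x *\<^sub>R \<xi>) = 0"
        using linear_on_diff[OF e s x(1) ex] linear_on_scale[OF e xi(1)] xi(2) by simp
      ultimately show "y \<in> ext_carrier H" unfolding x(2) ext_carrier_def using inH by simp
    qed
  qed
  have P7: "\<forall>p\<in>ext_carrier H. \<forall>q\<in>ext_carrier H.
                fst (ext_br B (B \<xi>) p q) *\<^sub>R \<xi> + snd (ext_br B (B \<xi>) p q)
                  = B (fst p *\<^sub>R \<xi> + snd p) (fst q *\<^sub>R \<xi> + snd q)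
              \<and> \<eta> (fst p *\<^sub>R \<xi> + snd p) = ext_eta p
              \<and> \<omega> (fst p *\<^sub>R \<xi> + snd p) (fst q *\<^sub>R \<xi> + snd q) = ext_omega \<omega> p q"
  proof (intro ballI conjI)
    fix p q assume p: "p \<in> ext_carrier H" and q: "q \<in> ext_carrier H"
    obtain a x where px: "p = (a, x)" by (cases p)
    obtain b y where qy: "q = (b, y)" by (cases q)
    have x: "x \<in> V" "\<eta> x = 0" using p px inH unfolding ext_carrier_def by auto
    have y: "y \<in> V" "\<eta> y = 0" using q qy inH unfolding ext_carrier_def by auto
    have byv: "b *\<^sub>R \<xi> + y \<in> V" using subspace_add[OF s subspace_scale[OF s xi(1)] y(1)] .
    have l1: "linear_on V (\<lambda>z. B z (b *\<^sub>R \<xi> + y))" using lB2 byv by blast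
    have lxi: "linear_on V (B \<xi>)" and lx: "linear_on V (B x)" using lB1 xi(1) x(1) by auto
    have "B (a *\<^sub>R \<xi> + x) (b *\<^sub>R \<xi> + y) = a *\<^sub>R B \<xi> (b *\<^sub>R \<xi> + y) + B x (b *\<^sub>R \<xi> + y)"
      using lin_comb[OF l1 s xi(1) x(1)] by simp
    also have "B \<xi> (b *\<^sub>R \<xi> + y) = B \<xi> y" using lin_comb[OF lxi s xi(1) y(1)] al xi(1) by simp
    also have "B x (b *\<^sub>R \<xi> + y) = b *\<^sub>R B x \<xi> + B x y" using lin_comb[OF lx s xi(1) y(1)] .
    also have "B x \<xi> = - B \<xi> x" using antB[OF x(1) xi(1)] .
    finally have eqB: "B (a *\<^sub>R \<xi> + x) (b *\<^sub>R \<xi> + y) = a *\<^sub>R B \<xi> y + (b *\<^sub>R (- B \<xi> x) + B x y)" .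
    show "fst (ext_br B (B \<xi>) p q) *\<^sub>R \<xi> + snd (ext_br B (B \<xi>) p q) = B (fst p *\<^sub>R \<xi> + snd p) (fst q *\<^sub>R \<xi> + snd q)"
      unfolding px qy ext_br_def using eqB by (simp add: algebra_simps)
    show "\<eta> (fst p *\<^sub>R \<xi> + snd p) = ext_eta p"
      unfolding px ext_eta_def using lin_comb[OF e s xi(1) x(1)] xi(2) x(2) by simp
    have lw: "linear_on V (\<lambda>z. \<omega> z (b *\<^sub>R \<xi> + y))" using lw2 byv by blast
    have lwx: "linear_on V (\<omega> x)" using lw1 x(1) by blast
    have "\<omega> (a *\<^sub>R \<xi> + x) (b *\<^sub>R \<xi> + y) = a * \<omega> \<xi> (b *\<^sub>R \<xi> + y) + \<omega> x (b *\<^sub>R \<xi> + y)"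
      using lin_comb[OF lw s xi(1) x(1)] by simp
    also have "\<omega> \<xi> (b *\<^sub>R \<xi> + y) = 0" using xi(3) byv by blast
    also have "\<omega> x (b *\<^sub>R \<xi> + y) = b * \<omega> x \<xi> + \<omega> x y" using lin_comb[OF lwx s xi(1) y(1)] by simp
    also have "\<omega> x \<xi> = 0" using xi2 x(1) by blast
    finally show "\<omega> (fst p *\<^sub>R \<xi> + snd p) (fst q *\<^sub>R \<xi> + snd q) = ext_omega \<omega> p q"
      unfolding px qy ext_omega_def by simp
  qed
  show ?thesis using P1 P2 P3 P4 P5 P6 P7 by blast
qed




lemma ext_br2:
  fixes H :: "'b::real_vector set"
  assumes L: "lie_algebra H B" and der: "derivation H B D" and x: "x \<in> H" and y: "y \<in> H" and z: "z \<in> H"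
  shows "ext_br B D (a, x) (ext_br B D (b, y) (c, z)) =
    (0, B x (B y z) + b *\<^sub>R B x (D z) - c *\<^sub>R B x (D y) + a *\<^sub>R (B (D y) z + B y (D z))
        + (a*b) *\<^sub>R D (D z) - (a*c) *\<^sub>R D (D y))"
proof -
  have s: "subspace H" and cl: "\<forall>x\<in>H. \<forall>y\<in>H. B x y \<in> H" and bl: "bilinear_on H B"
    using L unfolding lie_algebra_def by blast+
  have Dh: "\<forall>x\<in>H. D x \<in> H" and lD: "linear_on H D" and Dd: "\<forall>x\<in>H. \<forall>y\<in>H. D (B x y) = B (D x) y + B x (D y)"
    using der unfolding derivation_def by blast+
  have lx: "linear_on H (B x)" using bl x unfolding bilinear_on_def by blast
  have yz: "B y z \<in> H" and dz: "D z \<in> H" and dy: "D y \<in> H" using cl Dh y z by auto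
  have bdz: "b *\<^sub>R D z \<in> H" and cdy: "c *\<^sub>R D y \<in> H" using dz dy by (auto intro: subspace_scale[OF s])
  have P: "B y z + b *\<^sub>R D z \<in> H" using yz bdz by (rule subspace_add[OF s])
  define u where "u = B y z + b *\<^sub>R D z - c *\<^sub>R D y"
  have "ext_br B D (b, y) (c, z) = (0, u)" unfolding ext_br_def u_def by simp
  moreover have "ext_br B D (a, x) (0, u) = (0, B x u + a *\<^sub>R D u)" unfolding ext_br_def by simp
  moreover have "B x u = B x (B y z) + b *\<^sub>R B x (D z) - c *\<^sub>R B x (D y)"
    unfolding u_def using linear_on_diff[OF lx s P cdy] linear_on_add[OF lx yz bdz]
      linear_on_scale[OF lx dz] linear_on_scale[OF lx dy] by simp
  moreover have "D u = B (D y) z + B y (D z) + b *\<^sub>R D (D z) - c *\<^sub>R D (D y)"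
    unfolding u_def using linear_on_diff[OF lD s P cdy] linear_on_add[OF lD yz bdz]
      linear_on_scale[OF lD dz] linear_on_scale[OF lD dy] Dd y z by simp
  ultimately show ?thesis by (simp add: algebra_simps)
qed

lemma ext_jacobi:
  fixes H :: "'b::real_vector set"
  assumes L: "lie_algebra H B" and der: "derivation H B D" and x: "x \<in> H" and y: "y \<in> H" and z: "z \<in> H"
  shows "ext_br B D (a, x) (ext_br B D (b, y) (c, z)) + ext_br B D (b, y) (ext_br B D (c, z) (a, x))
       + ext_br B D (c, z) (ext_br B D (a, x) (b, y)) = 0"
proof -
  have cl: "\<forall>x\<in>H. \<forall>y\<in>H. B x y \<in> H"
    and jac: "\<forall>x\<in>H. \<forall>y\<in>H. \<forall>z\<in>H. B x (B y z) + B y (B z x) + B z (B x y) = 0"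
    using L unfolding lie_algebra_def by blast+
  have Dh: "\<forall>x\<in>H. D x \<in> H" using der unfolding derivation_def by blast
  have J: "B x (B y z) + B y (B z x) + B z (B x y) = 0" using jac x y z by blast
  have a1: "B (D y) z = - B z (D y)" using lie_antisym[OF L] Dh y z by blast
  have a2: "B (D z) x = - B x (D z)" using lie_antisym[OF L] Dh z x by blast
  have a3: "B (D x) y = - B y (D x)" using lie_antisym[OF L] Dh x y by blast
  have "snd (ext_br B D (a, x) (ext_br B D (b, y) (c, z)) + ext_br B D (b, y) (ext_br B D (c, z) (a, x))
       + ext_br B D (c, z) (ext_br B D (a, x) (b, y))) =
     (B x (B y z) + B y (B z x) + B z (B x y))"
    unfolding ext_br2[OF L der x y z] ext_br2[OF L der y z x] ext_br2[OF L der z x y] a1 a2 a3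
    by (simp add: algebra_simps)
  then show ?thesis using J ext_br2[OF L der x y z] ext_br2[OF L der y z x] ext_br2[OF L der z x y]
    by (simp add: prod_eq_iff)
qed




lemma part2:
  fixes H :: "'b::real_vector set" and \<Omega> :: "'b \<Rightarrow> 'b \<Rightarrow> real"
  assumes L: "lie_algebra H B" and d: "dim H = 2*n" and sy: "symplectic H B \<Omega> n"
    and der: "derivation H B D" and inf: "inf_symplectic H \<Omega> (\<lambda>x. D x + \<alpha> *\<^sub>R x)" and n1: "n \<ge> 1"
  shows "lie_algebra (ext_carrier H) (ext_br B D) \<and> dim (ext_carrier H) = 2*n+1
      \<and> alpha_cosymplectic (ext_carrier H) (ext_br B D) ext_eta (ext_omega \<Omega>) \<alpha> n
      \<and> (\<forall>\<xi>. reeb (ext_carrier H) ext_eta (ext_omega \<Omega>) \<xi> \<longleftrightarrow> \<xi> = (1, 0))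
      \<and> {p \<in> ext_carrier H. ext_eta p = 0} = (\<lambda>x. (0, x)) ` H
      \<and> (\<forall>x\<in>H. \<forall>y\<in>H. ext_br B D (0, x) (0, y) = (0, B x y)
                     \<and> ext_omega \<Omega> (0, x) (0, y) = \<Omega> x y)
      \<and> (\<forall>x\<in>H. ext_br B D (1, 0) (0, x) = (0, D x))"
proof -
  let ?E = "ext_carrier H"
  have s: "subspace H" and cl: "\<forall>x\<in>H. \<forall>y\<in>H. B x y \<in> H" and bl: "bilinear_on H B"
    and al: "\<forall>x\<in>H. B x x = 0"
    using L unfolding lie_algebra_def by blast+
  have tf: "two_form H \<Omega>" and clo: "\<forall>x\<in>H. \<forall>y\<in>H. \<forall>z\<in>H. d2 B \<Omega> x y z = 0"
    and nzH: "nonzero_on H (2*n) (omega_pow \<Omega> n)"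
    using sy unfolding symplectic_def by blast+
  have Dh: "\<forall>x\<in>H. D x \<in> H" and lD: "linear_on H D"
    using der unfolding derivation_def by blast+
  have symm: "\<forall>x\<in>H. \<forall>y\<in>H. \<Omega> (D x + \<alpha> *\<^sub>R x) y = \<Omega> (D y + \<alpha> *\<^sub>R y) x"
    using inf unfolding inf_symplectic_def by blast
  have lB1: "\<forall>x\<in>H. linear_on H (B x)" and lB2: "\<forall>y\<in>H. linear_on H (\<lambda>x. B x y)"
    using bl unfolding bilinear_on_def by blast+
  have lw1: "\<forall>x\<in>H. linear_on H (\<Omega> x)" and lw2: "\<forall>y\<in>H. linear_on H (\<lambda>x. \<Omega> x y)"
    using tf unfolding two_form_def bilinear_on_def by blast+
  have inE: "\<And>p. p \<in> ?E \<longleftrightarrow> snd p \<in> H" unfolding ext_carrier_def by simp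
  have h0: "0 \<in> H" by (rule subspace_0[OF s])
  have sE: "subspace ?E"
  proof (rule subspaceI)
    show "0 \<in> ?E" using h0 inE by simp
    show "\<And>p q. p \<in> ?E \<Longrightarrow> q \<in> ?E \<Longrightarrow> p + q \<in> ?E" using inE subspace_add[OF s] by simp
    show "\<And>c p. p \<in> ?E \<Longrightarrow> c *\<^sub>R p \<in> ?E" using inE subspace_scale[OF s] by simp
  qed
  have Q1: "lie_algebra ?E (ext_br B D)"
    unfolding lie_algebra_def
  proof (intro conjI ballI)
    show "subspace ?E" by (rule sE)
  next
    fix p q assume p: "p \<in> ?E" and q: "q \<in> ?E"
    have x: "snd p \<in> H" and y: "snd q \<in> H" using p q inE by auto
    have "B (snd p) (snd q) + fst p *\<^sub>R D (snd q) \<in> H"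
      using cl x y Dh by (intro subspace_add[OF s] subspace_scale[OF s]) auto
    moreover have "fst q *\<^sub>R D (snd p) \<in> H" using Dh x by (intro subspace_scale[OF s]) auto
    ultimately show "ext_br B D p q \<in> ?E" unfolding ext_br_def inE by (simp add: subspace_diff[OF s])
  next
    show "bilinear_on ?E (ext_br B D)"
      unfolding bilinear_on_def linear_on_def
    proof (intro conjI ballI allI)
      fix p q r and c :: real assume p: "p \<in> ?E" and q: "q \<in> ?E" and r: "r \<in> ?E"
      have x: "snd p \<in> H" and y: "snd q \<in> H" and z: "snd r \<in> H" using p q r inE by auto
      have lx: "linear_on H (B (snd p))" and ly: "linear_on H (\<lambda>w. B w (snd p))" using lB1 lB2 x by auto
      show "ext_br B D p (q + r) = ext_br B D p q + ext_br B D p r"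
        unfolding ext_br_def using linear_on_add[OF lx y z] linear_on_add[OF lD y z]
        by (simp add: algebra_simps)
      show "ext_br B D p (c *\<^sub>R q) = c *\<^sub>R ext_br B D p q"
        unfolding ext_br_def using linear_on_scale[OF lx y] linear_on_scale[OF lD y]
        by (simp add: algebra_simps)
      show "ext_br B D (q + r) p = ext_br B D q p + ext_br B D r p"
        unfolding ext_br_def using linear_on_add[OF ly y z] linear_on_add[OF lD y z]
        by (simp add: algebra_simps)
      show "ext_br B D (c *\<^sub>R q) p = c *\<^sub>R ext_br B D q p"
        unfolding ext_br_def using linear_on_scale[OF ly y] linear_on_scale[OF lD y]
        by (simp add: algebra_simps)
    qed
  next
    fix p assume "p \<in> ?E"
    then show "ext_br B D p p = 0" unfolding ext_br_def using al inE by (simp add: prod_eq_iff)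
  next
    fix p q r assume p: "p \<in> ?E" and q: "q \<in> ?E" and r: "r \<in> ?E"
    obtain a x where px: "p = (a, x)" by (cases p)
    obtain b y where qy: "q = (b, y)" by (cases q)
    obtain c z where rz: "r = (c, z)" by (cases r)
    have "x \<in> H" "y \<in> H" "z \<in> H" using p q r px qy rz inE by auto
    then show "ext_br B D p (ext_br B D q r) + ext_br B D q (ext_br B D r p) + ext_br B D r (ext_br B D p q) = 0"
      unfolding px qy rz by (rule ext_jacobi[OF L der])
  qed
  have Q2: "dim ?E = 2*n+1"
  proof -
    have "dim H = Suc (2*n - 1)" using d n1 by simp
    from dim_ext[OF s this] show ?thesis using n1 by simp
  qed
  have leta: "linear_on ?E ext_eta" unfolding linear_on_def ext_eta_def by simp
  have tfE: "two_form ?E (ext_omega \<Omega>)"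
    unfolding two_form_def bilinear_on_def linear_on_def
  proof (intro conjI ballI allI)
    fix p q r and c :: real assume p: "p \<in> ?E" and q: "q \<in> ?E" and r: "r \<in> ?E"
    have x: "snd p \<in> H" and y: "snd q \<in> H" and z: "snd r \<in> H" using p q r inE by auto
    have lx: "linear_on H (\<Omega> (snd p))" and ly: "linear_on H (\<lambda>w. \<Omega> w (snd p))" using lw1 lw2 x by auto
    show "ext_omega \<Omega> p (q + r) = ext_omega \<Omega> p q + ext_omega \<Omega> p r"
      unfolding ext_omega_def using linear_on_add[OF lx y z] by simp
    show "ext_omega \<Omega> p (c *\<^sub>R q) = c *\<^sub>R ext_omega \<Omega> p q"
      unfolding ext_omega_def using linear_on_scale[OF lx y] by simp
    show "ext_omega \<Omega> (q + r) p = ext_omega \<Omega> q p + ext_omega \<Omega> r p"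
      unfolding ext_omega_def using linear_on_add[OF ly y z] by simp
    show "ext_omega \<Omega> (c *\<^sub>R q) p = c *\<^sub>R ext_omega \<Omega> q p"
      unfolding ext_omega_def using linear_on_scale[OF ly y] by simp
    show "ext_omega \<Omega> p p = 0" unfolding ext_omega_def using tf x unfolding two_form_def by blast
  qed
  obtain w where w: "\<forall>i<2*n. w i \<in> H" "omega_pow \<Omega> n w \<noteq> 0" using nzH unfolding nonzero_on_def by blast
  define u where "u = (\<lambda>i. case i of 0 \<Rightarrow> (1::real, 0::'b) | Suc k \<Rightarrow> (0, w k))"
  have u0: "u 0 = (1, 0)" and uS: "\<And>k. u (Suc k) = (0, w k)" unfolding u_def by simp_all
  have uE: "\<forall>i<2*n+1. u i \<in> ?E"
  proof (intro allI impI)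
    fix i assume i: "i < 2*n+1"
    show "u i \<in> ?E"
    proof (cases i)
      case 0 then show ?thesis using u0 h0 inE by simp
    next
      case (Suc k) then show ?thesis using uS w(1) i inE by simp
    qed
  qed
  have "eta_omega_pow ext_eta (ext_omega \<Omega>) n u = ext_eta (u 0) * omega_pow (ext_omega \<Omega>) n (\<lambda>i. u (Suc i))"
  proof (rule eta_omega_pow_split)
    fix \<sigma> assume "\<sigma> permutes {..<2*n+1}" and s0: "\<sigma> 0 \<noteq> 0"
    then obtain k where "\<sigma> 0 = Suc k" by (cases "\<sigma> 0") auto
    then have "ext_eta ((u \<circ> \<sigma>) 0) = 0" using uS unfolding ext_eta_def by simp
    then show "FE ext_eta (ext_omega \<Omega>) n (u \<circ> \<sigma>) = 0" unfolding FE_def by simp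
  qed
  also have "omega_pow (ext_omega \<Omega>) n (\<lambda>i. u (Suc i)) = omega_pow \<Omega> n w"
    unfolding omega_pow_def ext_omega_def uS by simp
  finally have "eta_omega_pow ext_eta (ext_omega \<Omega>) n u = omega_pow \<Omega> n w" using u0 unfolding ext_eta_def by simp
  then have nzE: "nonzero_on ?E (2*n+1) (eta_omega_pow ext_eta (ext_omega \<Omega>) n)"
    unfolding nonzero_on_def using uE w(2) by auto
  have acE: "almost_cosymplectic ?E ext_eta (ext_omega \<Omega>) n"
    unfolding almost_cosymplectic_def using leta tfE nzE by blast
  have antw: "\<And>x y. x \<in> H \<Longrightarrow> y \<in> H \<Longrightarrow> \<Omega> x y = - \<Omega> y x" using two_form_antisym[OF tf s] by blast
  have S: "\<And>x y. x \<in> H \<Longrightarrow> y \<in> H \<Longrightarrow> \<Omega> (D x) y - \<Omega> (D y) x = - 2 * \<alpha> * \<Omega> x y"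
  proof -
    fix x y assume x: "x \<in> H" and y: "y \<in> H"
    have ly: "linear_on H (\<lambda>w. \<Omega> w y)" and lx: "linear_on H (\<lambda>w. \<Omega> w x)" using lw2 x y by auto
    have ax: "\<alpha> *\<^sub>R x \<in> H" "\<alpha> *\<^sub>R y \<in> H" using x y by (auto intro: subspace_scale[OF s])
    have "\<Omega> (D x + \<alpha> *\<^sub>R x) y = \<Omega> (D x) y + \<alpha> * \<Omega> x y"
      using linear_on_add[OF ly _ ax(1)] linear_on_scale[OF ly x] Dh x by simp
    moreover have "\<Omega> (D y + \<alpha> *\<^sub>R y) x = \<Omega> (D y) x + \<alpha> * \<Omega> y x"
      using linear_on_add[OF lx _ ax(2)] linear_on_scale[OF lx y] Dh y by simp
    ultimately show "\<Omega> (D x) y - \<Omega> (D y) x = - 2 * \<alpha> * \<Omega> x y" using symm x y antw[OF y x] by simp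
  qed
  have d2E: "\<forall>p\<in>?E. \<forall>q\<in>?E. \<forall>r\<in>?E. d2 (ext_br B D) (ext_omega \<Omega>) p q r = 2 * \<alpha> * wedge12 ext_eta (ext_omega \<Omega>) p q r"
  proof (intro ballI)
    fix p q r assume p: "p \<in> ?E" and q: "q \<in> ?E" and r: "r \<in> ?E"
    obtain a x where px: "p = (a, x)" by (cases p)
    obtain b y where qy: "q = (b, y)" by (cases q)
    obtain c z where rz: "r = (c, z)" by (cases r)
    have x: "x \<in> H" and y: "y \<in> H" and z: "z \<in> H" using p q r px qy rz inE by auto
    have br: "\<And>u v e e' f. u \<in> H \<Longrightarrow> v \<in> H \<Longrightarrow> f \<in> H \<Longrightarrow>
        \<Omega> (B u v + e *\<^sub>R D v - e' *\<^sub>R D u) f = \<Omega> (B u v) f + e * \<Omega> (D v) f - e' * \<Omega> (D u) f"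
    proof -
      fix u v e e' f assume u: "u \<in> H" and v: "v \<in> H" and f: "f \<in> H"
      have lf: "linear_on H (\<lambda>w. \<Omega> w f)" using lw2 f by blast
      have uv: "B u v \<in> H" "D v \<in> H" "D u \<in> H" using cl Dh u v by auto
      have sc: "e *\<^sub>R D v \<in> H" "e' *\<^sub>R D u \<in> H" using uv by (auto intro: subspace_scale[OF s])
      have sm: "B u v + e *\<^sub>R D v \<in> H" using uv(1) sc(1) by (rule subspace_add[OF s])
      show "\<Omega> (B u v + e *\<^sub>R D v - e' *\<^sub>R D u) f = \<Omega> (B u v) f + e * \<Omega> (D v) f - e' * \<Omega> (D u) f"
        using linear_on_diff[OF lf s sm sc(2)] linear_on_add[OF lf uv(1) sc(1)]
          linear_on_scale[OF lf uv(2)] linear_on_scale[OF lf uv(3)] by simp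
    qed
    have C: "- \<Omega> (B x y) z - \<Omega> (B y z) x - \<Omega> (B z x) y = 0" using clo x y z unfolding d2_def by blast
    have "d2 (ext_br B D) (ext_omega \<Omega>) p q r =
        (- \<Omega> (B x y) z - \<Omega> (B y z) x - \<Omega> (B z x) y)
        + a * (\<Omega> (D z) y - \<Omega> (D y) z) + b * (\<Omega> (D x) z - \<Omega> (D z) x) + c * (\<Omega> (D y) x - \<Omega> (D x) y)"
      unfolding px qy rz d2_def ext_omega_def ext_br_def snd_conv fst_conv
        br[OF x y z, where e=a and e'=b] br[OF y z x, where e=b and e'=c] br[OF z x y, where e=c and e'=a]
      by (simp add: algebra_simps)
    also have "\<dots> = a * (2 * \<alpha> * \<Omega> y z) + b * (2 * \<alpha> * \<Omega> z x) + c * (2 * \<alpha> * \<Omega> x y)"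
      using C S[OF z y] S[OF x z] S[OF y x] antw[OF z y] antw[OF x z] antw[OF y x] by simp
    also have "\<dots> = 2 * \<alpha> * wedge12 ext_eta (ext_omega \<Omega>) p q r"
      unfolding px qy rz wedge12_def ext_eta_def ext_omega_def by (simp add: algebra_simps)
    finally show "d2 (ext_br B D) (ext_omega \<Omega>) p q r = 2 * \<alpha> * wedge12 ext_eta (ext_omega \<Omega>) p q r" .
  qed
  have Q3: "alpha_cosymplectic ?E (ext_br B D) ext_eta (ext_omega \<Omega>) \<alpha> n"
    unfolding alpha_cosymplectic_def using acE d2E by (simp add: d1_def ext_br_def ext_eta_def)
  have r10: "reeb ?E ext_eta (ext_omega \<Omega>) (1, 0)"
    unfolding reeb_def
  proof (intro conjI ballI)
    show "(1, 0) \<in> ?E" using inE h0 by simp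
    show "ext_eta (1, 0) = 1" by (simp add: ext_eta_def)
    fix q assume "q \<in> ?E"
    then have "snd q \<in> H" using inE by simp
    then have "linear_on H (\<lambda>w. \<Omega> w (snd q))" using lw2 by blast
    then show "ext_omega \<Omega> (1, 0) q = 0" unfolding ext_omega_def using linear_on_0[OF _ s] by simp
  qed
  have Q4: "\<forall>\<xi>. reeb ?E ext_eta (ext_omega \<Omega>) \<xi> \<longleftrightarrow> \<xi> = (1, 0)"
    using reeb_unique[OF sE Q2 acE _ r10] r10 by blast
  have Q5: "{p \<in> ?E. ext_eta p = 0} = (\<lambda>x. (0, x)) ` H"
  proof
    show "{p \<in> ?E. ext_eta p = 0} \<subseteq> (\<lambda>x. (0, x)) ` H"
    proof
      fix p assume "p \<in> {p \<in> ?E. ext_eta p = 0}"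
      then have "snd p \<in> H" "fst p = 0" using inE unfolding ext_eta_def by auto
      then show "p \<in> (\<lambda>x. (0, x)) ` H" by (intro image_eqI[of _ _ "snd p"]) (auto simp: prod_eq_iff)
    qed
    show "(\<lambda>x. (0, x)) ` H \<subseteq> {p \<in> ?E. ext_eta p = 0}" using inE unfolding ext_eta_def by auto
  qed
  have Q6: "\<forall>x\<in>H. \<forall>y\<in>H. ext_br B D (0, x) (0, y) = (0, B x y) \<and> ext_omega \<Omega> (0, x) (0, y) = \<Omega> x y"
    unfolding ext_br_def ext_omega_def by simp
  have Q7: "\<forall>x\<in>H. ext_br B D (1, 0) (0, x) = (0, D x)"
  proof
    fix x assume "x \<in> H"
    then have "linear_on H (\<lambda>w. B w x)" using lB2 by blast
    then have "B 0 x = 0" using linear_on_0[OF _ s] by blast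
    then show "ext_br B D (1, 0) (0, x) = (0, D x)" unfolding ext_br_def by simp
  qed
  show ?thesis using Q1 Q2 Q3 Q4 Q5 Q6 Q7 by blast
qed



lemma ex1_reeb:
  assumes L: "lie_algebra V B" and d: "dim V = 2*n+1" and ac: "alpha_cosymplectic V B \<eta> \<omega> \<alpha> n"
  shows "\<exists>!\<xi>. reeb V \<eta> \<omega> \<xi>"
proof -
  have s: "subspace V" using L unfolding lie_algebra_def by blast
  have acs: "almost_cosymplectic V \<eta> \<omega> n" using ac unfolding alpha_cosymplectic_def by blast
  obtain \<xi> where r: "reeb V \<eta> \<omega> \<xi>" using reeb_exists[OF s d acs] by blast
  show ?thesis using r reeb_unique[OF s d acs] by blast
qed

theorem mainTheorem4:
  fixes \<alpha> :: real and n :: nat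
  assumes n1: "n \<ge> 1"
  shows
  \<comment> \<open>(1) from an alpha-cosymplectic Lie algebra to (h, Omega, D), and back up to isomorphism\<close>
  "(\<forall>(V :: 'a::real_vector set) B \<eta> \<omega>.
      lie_algebra V B \<and> dim V = 2*n+1 \<and> alpha_cosymplectic V B \<eta> \<omega> \<alpha> n \<longrightarrow>
      (\<exists>!\<xi>. reeb V \<eta> \<omega> \<xi>) \<and>
      (\<forall>\<xi>. reeb V \<eta> \<omega> \<xi> \<longrightarrow>
        (let H = {x \<in> V. \<eta> x = 0}; D = B \<xi>; f = (\<lambda>p. fst p *\<^sub>R \<xi> + snd p) in
          lie_algebra H B \<and> dim H = 2*n \<and> symplectic H B \<omega> n \<and> derivation H B D
          \<and> inf_symplectic H \<omega> (\<lambda>x. D x + \<alpha> *\<^sub>R x)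
          \<and> bij_betw f (ext_carrier H) V
          \<and> (\<forall>p\<in>ext_carrier H. \<forall>q\<in>ext_carrier H.
                f (ext_br B D p q) = B (f p) (f q)
              \<and> \<eta> (f p) = ext_eta p
              \<and> \<omega> (f p) (f q) = ext_omega \<omega> p q))))
  \<and>
  \<comment> \<open>(2) from (h, Omega, D) to an alpha-cosymplectic Lie algebra, and back\<close>
   (\<forall>(H :: 'b::real_vector set) B \<Omega> D.
      lie_algebra H B \<and> dim H = 2*n \<and> symplectic H B \<Omega> n \<and> derivation H B D
      \<and> inf_symplectic H \<Omega> (\<lambda>x. D x + \<alpha> *\<^sub>R x) \<longrightarrow>
      lie_algebra (ext_carrier H) (ext_br B D) \<and> dim (ext_carrier H) = 2*n+1
      \<and> alpha_cosymplectic (ext_carrier H) (ext_br B D) ext_eta (ext_omega \<Omega>) \<alpha> n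
      \<and> (\<forall>\<xi>. reeb (ext_carrier H) ext_eta (ext_omega \<Omega>) \<xi> \<longleftrightarrow> \<xi> = (1, 0))
      \<and> {p \<in> ext_carrier H. ext_eta p = 0} = (\<lambda>x. (0, x)) ` H
      \<and> (\<forall>x\<in>H. \<forall>y\<in>H. ext_br B D (0, x) (0, y) = (0, B x y)
                     \<and> ext_omega \<Omega> (0, x) (0, y) = \<Omega> x y)
      \<and> (\<forall>x\<in>H. ext_br B D (1, 0) (0, x) = (0, D x)))"
  apply (rule conjI)
  subgoal
    apply (intro allI impI)
    apply (elim conjE)
    subgoal for V B \<eta> \<omega>
      apply (rule conjI)
       apply (rule ex1_reeb; assumption)
      apply (intro allI impI)
      subgoal for \<xi> unfolding Let_def by (rule part1; assumption)
      done
    done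
  subgoal
    apply (intro allI impI)
    apply (elim conjE)
    subgoal for H B \<Omega> D using part2[of H B n \<Omega> D \<alpha>] n1 by blast
    done
  done

end
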